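(* Let $\mathcal{N}=(\mathcal{S},\mathcal{C},\mathcal{R})$ be a chemical reaction network. The following are equivalent: (i) $\ker(J_c(f_\kappa))\cap\Gamma\neq\{0\}$ for all $\kappa\in\mathbb{R}_+^{\mathcal{R}}$ and all $c\in\mathbb{R}^n_+$; (ii) $\det(\mathcal{Y}(R)_I)\det(\Gamma(R)_I)=0$ for all sets $R$ of $s$ reactions of $\mathcal{R}$ and all $I\in\mathcal{O}_d(\mathcal{N})$; (iii) for all $I\in\mathcal{O}_d(\mathcal{N})$ and every set of $s$ reactions $y^1\to y'^1,\dots,y^s\to y'^s$ of the projected network $\mathcal{N}_I$, if the vectors $y^1-y'^1,\dots,y^s-y'^s$ are linearly independent, then $y^1,\dots,y^s$ are linearly dependent. If any of these holds, then $\mathcal{N}$ is not injective and every steady state (for every rate vector) is degenerate.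
   Context: A chemical reaction network $\mathcal{N}=(\mathcal{S},\mathcal{C},\mathcal{R})$ consists of a finite set of species $\mathcal{S}=\{S_1,\dots,S_n\}$, a finite set of complexes $\mathcal{C}\subset\mathbb{Z}_{\ge 0}^n$ (species $S_i$ identified with the $i$-th standard basis vector; zero complex allowed), and a finite set of reactions $\mathcal{R}\subset\mathcal{C}\times\mathcal{C}$, written $y\to y'$, with $y\ne y'$. A rate vector is $\kappa=(k_{y\to y'})\in\mathbb{R}_+^{\mathcal{R}}$ ($\mathbb{R}_+$ the positive reals); the mass-action species formation rate function is $f_\kappa(c)=\sum_{y\to y'\in\mathcal{R}}k_{y\to y'}c^y(y'-y)$, $c^y=\prod_i c_i^{y_i}$, with Jacobian $J_c(f_\kappa)$ at $c$. A steady state is $c\in\mathbb{R}^n$ with $f_\kappa(c)=0$; it is degenerate if $\ker(J_c(f_\kappa))\cap\Gamma\ne\{0\}$. The stoichiometric subspace is $\Gamma=\mathrm{span}\{y'-y:y\to y'\in\mathcal{R}\}$, $s=\dim\Gamma$, $d=n-s$. The network is injective if for every rate vector $\kappa$ and all distinct $a,b\in\mathbb{R}^n_+$ with $a-b\in\Gamma$, $f_\kappa(a)\ne f_\kappa(b)$. Let $\mathcal{O}(\mathcal{N})=\{i: S_i\to 0\notin\mathcal{R}\}$ and $\mathcal{O}_d(\mathcal{N})$ the set of its subsets of cardinality $d$. For a set $R$ of $s$ reactions $y^i\to y'^i$, $\mathcal{Y}(R)$ (resp. $\Gamma(R)$) is the $n\times s$ matrix with $i$-th column $y^i$ (resp.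 $y^i-y'^i$), and for $I\in\mathcal{O}_d(\mathcal{N})$, $M_I$ denotes the $s\times s$ matrix obtained from $M$ by deleting the rows with index in $I$. For $I\in\mathcal{O}_d(\mathcal{N})$, the projected network $\mathcal{N}_I$ has species $\{S_i: i\notin I\}$ and reactions $\pi_I(y)\to\pi_I(y')$ for $y\to y'\in\mathcal{R}$, where $\pi_I:\mathbb{R}^n\to\mathbb{R}^s$ is the coordinate projection forgetting the coordinates in $I$; reactions with $\pi_I(y)=\pi_I(y')$ and duplicate reactions are discarded. *)

theory Defs
  imports "HOL-Analysis.Analysis"
begin

text \<open>Species are the elements of a finite, linearly ordered
  type 'n (the order is the labelling S_1,...,S_n).\<close>

type_synonym 'n complex = "nat ^ 'n"
type_synonym 'n reaction = "'n complex \<times> 'n complex"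

definition rvec :: "'n complex \<Rightarrow> real ^ 'n" where
  "rvec y = (\<chi> i. real (y $ i))"

definition crn :: "'n::finite reaction set \<Rightarrow> bool" where
  "crn R \<longleftrightarrow> finite R \<and> (\<forall>r\<in>R. fst r \<noteq> snd r)"

definition cmonom :: "real ^ 'n::finite \<Rightarrow> 'n complex \<Rightarrow> real" where
  "cmonom c y = (\<Prod>i\<in>UNIV. (c $ i) ^ (y $ i))"

definition formation_rate ::
  "'n::finite reaction set \<Rightarrow> ('n reaction \<Rightarrow> real) \<Rightarrow> real ^ 'n \<Rightarrow> real ^ 'n" where
  "formation_rate R \<kappa> c = (\<Sum>r\<in>R. (\<kappa> r * cmonom c (fst r)) *\<^sub>R (rvec (snd r) - rvec (fst r)))"

definition rate_vector :: "'n::finite reaction set \<Rightarrow> ('n reaction \<Rightarrow> real) \<Rightarrow> bool" where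
  "rate_vector R \<kappa> \<longleftrightarrow> (\<forall>r\<in>R. \<kappa> r > 0)"

definition positive_vec :: "real ^ 'n::finite \<Rightarrow> bool" where
  "positive_vec c \<longleftrightarrow> (\<forall>i. c $ i > 0)"

definition jacobian :: "(real ^ 'n::finite \<Rightarrow> real ^ 'n) \<Rightarrow> real ^ 'n \<Rightarrow> real ^ 'n ^ 'n" where
  "jacobian f c = matrix (frechet_derivative f (at c))"

definition stoich_subspace :: "'n::finite reaction set \<Rightarrow> (real ^ 'n) set" where
  "stoich_subspace R = span {rvec (snd r) - rvec (fst r) | r. r \<in> R}"

definition stoich_dim :: "'n::finite reaction set \<Rightarrow> nat" where
  "stoich_dim R = dim (stoich_subspace R)"

definition codim :: "'n::finite reaction set \<Rightarrow> nat" where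
  "codim R = CARD('n) - stoich_dim R"

definition degenerate_at :: "'n::finite reaction set \<Rightarrow> ('n reaction \<Rightarrow> real) \<Rightarrow> real ^ 'n \<Rightarrow> bool" where
  "degenerate_at R \<kappa> c \<longleftrightarrow>
     {v. jacobian (formation_rate R \<kappa>) c *v v = 0} \<inter> stoich_subspace R \<noteq> {0}"

definition injective_crn :: "'n::finite reaction set \<Rightarrow> bool" where
  "injective_crn R \<longleftrightarrow> (\<forall>\<kappa>. rate_vector R \<kappa> \<longrightarrow>
     (\<forall>a b. positive_vec a \<and> positive_vec b \<and> a \<noteq> b \<and> a - b \<in> stoich_subspace R
        \<longrightarrow> formation_rate R \<kappa> a \<noteq> formation_rate R \<kappa> b))"

definition no_outflow :: "'n::finite reaction set \<Rightarrow> 'n set" where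
  "no_outflow R = {i. (axis i 1, 0) \<notin> R}"

definition no_outflow_d :: "'n::finite reaction set \<Rightarrow> 'n set set" where
  "no_outflow_d R = {I. I \<subseteq> no_outflow R \<and> card I = codim R}"

definition detm :: "nat \<Rightarrow> (nat \<Rightarrow> nat \<Rightarrow> real) \<Rightarrow> real" where
  "detm m M = (\<Sum>p\<in>{p. p permutes {..<m}}. of_int (sign p) * (\<Prod>i<m. M i (p i)))"

definition kept_rows :: "'n::{finite,linorder} set \<Rightarrow> 'n list" where
  "kept_rows I = sorted_list_of_set (UNIV - I)"

definition Ymat_del :: "'n::{finite,linorder} reaction list \<Rightarrow> 'n set \<Rightarrow> nat \<Rightarrow> nat \<Rightarrow> real" where
  "Ymat_del rs I i j = real (fst (rs ! j) $ (kept_rows I ! i))"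

definition Gmat_del :: "'n::{finite,linorder} reaction list \<Rightarrow> 'n set \<Rightarrow> nat \<Rightarrow> nat \<Rightarrow> real" where
  "Gmat_del rs I i j = real (fst (rs ! j) $ (kept_rows I ! i)) - real (snd (rs ! j) $ (kept_rows I ! i))"

text \<open>Projection pi_I, realised by setting the coordinates in I to zero (an isomorphic copy of
  R^(S \ I) inside R^n).\<close>
definition proj_complex :: "'n::finite set \<Rightarrow> 'n complex \<Rightarrow> 'n complex" where
  "proj_complex I y = (\<chi> i. if i \<in> I then 0 else y $ i)"

definition projected_reactions :: "'n::finite reaction set \<Rightarrow> 'n set \<Rightarrow> 'n reaction set" where
  "projected_reactions R I =
     {(proj_complex I (fst r), proj_complex I (snd r)) | r. r \<in> R \<and>
        proj_complex I (fst r) \<noteq> proj_complex I (snd r)}"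

definition lin_indep_fam :: "'a::real_vector list \<Rightarrow> bool" where
  "lin_indep_fam vs \<longleftrightarrow> distinct vs \<and> independent (set vs)"

end

theory Submission
  imports Defs "Jordan_Normal_Form.Determinant"
begin


lemma detm_det: "detm s M = Determinant.det (Matrix.mat s s (\<lambda>(i,j). M i j))"
  unfolding detm_def Determinant.det_def by (simp add: atLeast0LessThan)

definition FB :: "nat \<Rightarrow> nat \<Rightarrow> (nat \<Rightarrow> nat) set" where
  "FB s m = {f. (\<forall>i\<in>{0..<s}. f i \<in> {0..<m}) \<and> (\<forall>i. i \<notin> {0..<s} \<longrightarrow> f i = i)}"

definition hterm :: "(nat \<Rightarrow> nat \<Rightarrow> real) \<Rightarrow> (nat \<Rightarrow> nat \<Rightarrow> real) \<Rightarrow> nat \<Rightarrow> (nat \<Rightarrow> nat) \<Rightarrow> real" where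
  "hterm A B s f = (\<Prod>i=0..<s. A i (f i)) * detm s (\<lambda>i k. B (f i) k)"

lemma finite_FB: "finite (FB s m)"
  unfolding FB_def by (rule finite_bounded_functions) auto

lemma expand_X:
  "detm s (\<lambda>i k. \<Sum>j=0..<m. A i j * B j k) = (\<Sum>f\<in>FB s m. hterm A B s f)"
proof -
  define Am where "Am = Matrix.mat s m (\<lambda>(i,j). A i j)"
  define Bm where "Bm = Matrix.mat m s (\<lambda>(i,j). B i j)"
  have Am: "Am \<in> carrier_mat s m" and Bm: "Bm \<in> carrier_mat m s" unfolding Am_def Bm_def by auto
  have "Matrix.mat s s (\<lambda>(i,k). \<Sum>j=0..<m. A i j * B j k) = Am * Bm"
    by (rule eq_matI) (auto simp: Am_def Bm_def scalar_prod_def intro!: sum.cong)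
  hence "detm s (\<lambda>i k. \<Sum>j=0..<m. A i j * B j k) = Determinant.det (Am * Bm)"
    by (simp add: detm_det)
  also have "\<dots> = (\<Sum>f\<in>FB s m. Determinant.det (mat\<^sub>r s s (\<lambda> i. Am $$ (i, f i) \<cdot>\<^sub>v row Bm (f i))))"
    unfolding mat_mul_finsum_alt[OF Am Bm] FB_def
    by (rule det_linear_rows_sum) (insert Bm, auto)
  also have "\<dots> = (\<Sum>f\<in>FB s m. hterm A B s f)"
  proof (rule sum.cong[OF refl])
    fix f assume f: "f \<in> FB s m"
    have rows: "(\<lambda>i. row Bm (f i)) \<in> {0..<s} \<rightarrow> carrier_vec s" using Bm by auto
    have "Determinant.det (mat\<^sub>r s s (\<lambda> i. Am $$ (i, f i) \<cdot>\<^sub>v row Bm (f i)))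
       = prod (\<lambda>i. Am $$ (i, f i)) {0..<s} * Determinant.det (mat\<^sub>r s s (\<lambda>i. row Bm (f i)))"
      by (rule det_rows_mul[OF rows])
    also have "prod (\<lambda>i. Am $$ (i, f i)) {0..<s} = (\<Prod>i=0..<s. A i (f i))"
      using f by (auto simp: FB_def Am_def intro!: prod.cong)
    also have "mat\<^sub>r s s (\<lambda>i. row Bm (f i)) = Matrix.mat s s (\<lambda>(i,k). B (f i) k)"
      using f by (intro eq_matI) (auto simp: FB_def Bm_def)
    finally show "Determinant.det (mat\<^sub>r s s (\<lambda> i. Am $$ (i, f i) \<cdot>\<^sub>v row Bm (f i))) = hterm A B s f"
      by (simp add: hterm_def detm_det)
  qed
  finally show ?thesis .
qed

lemma detm_mult: "detm s (\<lambda>i k. \<Sum>j=0..<s. P i j * Q j k) = detm s P * detm s Q"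
proof -
  have "Matrix.mat s s (\<lambda>(i,k). \<Sum>j=0..<s. P i j * Q j k) = Matrix.mat s s (\<lambda>(i,j). P i j) * Matrix.mat s s (\<lambda>(i,j). Q i j)"
    by (rule eq_matI) (auto simp: scalar_prod_def intro!: sum.cong)
  thus ?thesis by (simp add: detm_det det_mult[of _ s])
qed

lemma hterm_noninj:
  assumes f: "f \<in> FB s m" and ni: "\<not> inj_on f {0..<s}"
  shows "hterm A B s f = 0"
proof -
  from ni obtain i j where ij: "i < s" "j < s" "i \<noteq> j" "f i = f j" unfolding inj_on_def by auto
  have "Determinant.det (Matrix.mat s s (\<lambda>(i,k). B (f i) k)) = 0"
    by (rule det_identical_rows[OF _ ij(3) ij(1) ij(2)]) (insert ij, auto intro!: eq_vecI)
  thus ?thesis by (simp add: hterm_def detm_det)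
qed

lemma hterm_perm_sum:
  assumes f: "f \<in> FB s m" and inj: "inj_on f {0..<s}"
  shows "(\<Sum>g\<in>{g. g permutes {0..<s}}. hterm A B s (f \<circ> g)) =
     detm s (\<lambda>i k. A i (f k)) * detm s (\<lambda>i k. B (f i) k)"
proof -
  have "detm s (\<lambda>i k. A i (f k)) * detm s (\<lambda>i k. B (f i) k) =
     detm s (\<lambda>i k. \<Sum>j=0..<s. A i (f j) * B (f j) k)"
    by (rule detm_mult[symmetric])
  also have "\<dots> = (\<Sum>g\<in>FB s s. hterm (\<lambda>i j. A i (f j)) (\<lambda>j k. B (f j) k) s g)"
    by (rule expand_X)
  also have "\<dots> = (\<Sum>g\<in>FB s s. hterm A B s (f \<circ> g))"
    by (simp add: hterm_def)
  also have "\<dots> = (\<Sum>g\<in>{g. g permutes {0..<s}}. hterm A B s (f \<circ> g))"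
  proof (rule sum.mono_neutral_right[OF finite_FB])
    show "{g. g permutes {0..<s}} \<subseteq> FB s s"
      by (auto simp: FB_def permutes_in_image permutes_not_in)
    show "\<forall>g\<in>FB s s - {g. g permutes {0..<s}}. hterm A B s (f \<circ> g) = 0"
    proof
      fix g assume g: "g \<in> FB s s - {g. g permutes {0..<s}}"
      have "\<not> inj_on g {0..<s}"
      proof
        assume "inj_on g {0..<s}"
        hence "g permutes {0..<s}" by (rule inj_on_nat_permutes) (insert g, auto simp: FB_def)
        with g show False by auto
      qed
      hence "\<not> inj_on (f \<circ> g) {0..<s}" using inj_on_imageI2 by blast
      moreover have "f \<circ> g \<in> FB s m" using g f by (auto simp: FB_def)
      ultimately show "hterm A B s (f \<circ> g) = 0" by (rule hterm_noninj[rotated])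
    qed
  qed
  finally show ?thesis ..
qed

lemma cauchy_binet_exists:
  fixes A B :: "nat \<Rightarrow> nat \<Rightarrow> real"
  assumes "detm s (\<lambda>i k. \<Sum>j=0..<m. A i j * B j k) \<noteq> 0"
  shows "\<exists>f. (\<forall>i<s. f i < m) \<and> inj_on f {0..<s} \<and> detm s (\<lambda>i k. A i (f k)) \<noteq> 0 \<and> detm s (\<lambda>i k. B (f i) k) \<noteq> 0"
proof (rule ccontr)
  assume nex: "\<not> ?thesis"
  let ?P = "{g. g permutes {0..<s}}"
  let ?h = "hterm A B s"
  have zero: "(\<Sum>g\<in>?P. ?h (f \<circ> g)) = 0" if f: "f \<in> FB s m" for f
  proof (cases "inj_on f {0..<s}")
    case True
    have "\<forall>i<s. f i < m" using f by (auto simp: FB_def)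
    with nex True have "detm s (\<lambda>i k. A i (f k)) * detm s (\<lambda>i k. B (f i) k) = 0" by auto
    thus ?thesis using hterm_perm_sum[OF f True] by simp
  next
    case False
    show ?thesis
    proof (rule sum.neutral, intro ballI)
      fix g assume g: "g \<in> ?P"
      hence gb: "bij_betw g {0..<s} {0..<s}" by (simp add: permutes_imp_bij)
      have "\<not> inj_on (f \<circ> g) {0..<s}"
      proof
        assume "inj_on (f \<circ> g) {0..<s}"
        hence "inj_on f (g ` {0..<s})" using inj_on_imageI by blast
        thus False using False gb by (simp add: bij_betw_def)
      qed
      moreover have "f \<circ> g \<in> FB s m" using g f
        by (auto simp: FB_def permutes_in_image permutes_not_in)
      ultimately show "?h (f \<circ> g) = 0" by (rule hterm_noninj[rotated])
    qed
  qed
  have reidx: "(\<Sum>f\<in>FB s m. ?h (f \<circ> g)) = (\<Sum>f\<in>FB s m. ?h f)" if g: "g \<in> ?P" for g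
  proof -
    have gp: "g permutes {0..<s}" using g by simp
    show ?thesis
    proof (rule sum.reindex_bij_witness[where i="\<lambda>f. f \<circ> Hilbert_Choice.inv g" and j="\<lambda>f. f \<circ> g"])
      fix f assume "f \<in> FB s m"
      thus "f \<circ> g \<circ> Hilbert_Choice.inv g = f" using permutes_inverses(1)[OF gp] by (auto simp: fun_eq_iff)
      show "f \<circ> g \<in> FB s m" using gp \<open>f \<in> FB s m\<close> by (auto simp: FB_def permutes_in_image permutes_not_in)
    next
      fix f assume "f \<in> FB s m"
      thus "f \<circ> Hilbert_Choice.inv g \<circ> g = f" using permutes_inverses(2)[OF gp] by (auto simp: fun_eq_iff)
      show "f \<circ> Hilbert_Choice.inv g \<in> FB s m" using permutes_inv[OF gp] \<open>f \<in> FB s m\<close>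
        by (auto simp: FB_def permutes_in_image permutes_not_in)
    qed simp
  qed
  have "of_nat (card ?P) * (\<Sum>f\<in>FB s m. ?h f) = (\<Sum>g\<in>?P. \<Sum>f\<in>FB s m. ?h (f \<circ> g))"
    using reidx by simp
  also have "\<dots> = (\<Sum>f\<in>FB s m. \<Sum>g\<in>?P. ?h (f \<circ> g))" by (rule sum.swap)
  also have "\<dots> = 0" using zero by simp
  finally have "(\<Sum>f\<in>FB s m. ?h f) = 0"
    using card_permutations[of "{0..<s}" s] by simp
  with assms expand_X show False by simp
qed


lemma detm_nz_iff:
  fixes M :: "nat \<Rightarrow> nat \<Rightarrow> real"
  shows "detm s M \<noteq> 0 \<longleftrightarrow> (\<forall>a. (\<forall>i<s. (\<Sum>j<s. M i j * a j) = 0) \<longrightarrow> (\<forall>j<s. a j = 0))"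
proof -
  let ?A = "Matrix.mat s s (\<lambda>(i,j). M i j)"
  have A: "?A \<in> carrier_mat s s" by auto
  have "detm s M = 0 \<longleftrightarrow> (\<exists>v. v \<in> carrier_vec s \<and> v \<noteq> 0\<^sub>v s \<and> ?A *\<^sub>v v = 0\<^sub>v s)"
    unfolding detm_det by (rule det_0_iff_vec_prod_zero[OF A])
  also have "\<dots> \<longleftrightarrow> (\<exists>a. (\<forall>i<s. (\<Sum>j<s. M i j * a j) = 0) \<and> \<not> (\<forall>j<s. a j = 0))"
  proof
    assume "\<exists>v. v \<in> carrier_vec s \<and> v \<noteq> 0\<^sub>v s \<and> ?A *\<^sub>v v = 0\<^sub>v s"
    then obtain v where v: "v \<in> carrier_vec s" "v \<noteq> 0\<^sub>v s" "?A *\<^sub>v v = 0\<^sub>v s" by blast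
    have 1: "\<forall>i<s. (\<Sum>j<s. M i j * v $ j) = 0"
    proof (intro allI impI)
      fix i assume i: "i < s"
      have "(?A *\<^sub>v v) $ i = 0" using v(3) i by simp
      thus "(\<Sum>j<s. M i j * v $ j) = 0" using i v(1)
        by (simp add: scalar_prod_def atLeast0LessThan)
    qed
    have 2: "\<not> (\<forall>j<s. v $ j = 0)"
    proof
      assume "\<forall>j<s. v $ j = 0"
      hence "v = 0\<^sub>v s" using v(1) by (intro eq_vecI) auto
      with v(2) show False by simp
    qed
    from 1 2 show "\<exists>a. (\<forall>i<s. (\<Sum>j<s. M i j * a j) = 0) \<and> \<not> (\<forall>j<s. a j = 0)" by blast
  next
    assume "\<exists>a. (\<forall>i<s. (\<Sum>j<s. M i j * a j) = 0) \<and> \<not> (\<forall>j<s. a j = 0)"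
    then obtain a where a: "\<forall>i<s. (\<Sum>j<s. M i j * a j) = 0" "\<not> (\<forall>j<s. a j = 0)" by blast
    let ?v = "Matrix.vec s a"
    have "?v \<in> carrier_vec s" by simp
    moreover have "?v \<noteq> 0\<^sub>v s"
    proof
      assume "?v = 0\<^sub>v s"
      hence "\<forall>j<s. a j = 0" by (metis index_vec index_zero_vec(1))
      with a(2) show False by simp
    qed
    moreover have "?A *\<^sub>v ?v = 0\<^sub>v s"
      using a(1) by (intro eq_vecI) (auto simp: scalar_prod_def atLeast0LessThan)
    ultimately show "\<exists>v. v \<in> carrier_vec s \<and> v \<noteq> 0\<^sub>v s \<and> ?A *\<^sub>v v = 0\<^sub>v s" by blast
  qed
  finally show ?thesis by blast
qed

lemma detm_transpose: "detm s (\<lambda>i j. M j i) = detm s (M :: nat \<Rightarrow> nat \<Rightarrow> real)"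
proof -
  have "Matrix.mat s s (\<lambda>(i,j). M j i) = transpose_mat (Matrix.mat s s (\<lambda>(i,j). M i j))"
    by (rule eq_matI) auto
  thus ?thesis unfolding detm_det by (simp add: det_transpose[of _ s])
qed

lemma detm_nz_iff_T:
  fixes M :: "nat \<Rightarrow> nat \<Rightarrow> real"
  shows "detm s M \<noteq> 0 \<longleftrightarrow> (\<forall>b. (\<forall>j<s. (\<Sum>i<s. b i * M i j) = 0) \<longrightarrow> (\<forall>i<s. b i = 0))"
  using detm_nz_iff[of s "\<lambda>i j. M j i"] detm_transpose[of s M] by (simp add: mult.commute)


no_notation Matrix.vec_index (infixl "$" 100)

definition QB :: "(real^'n::finite) set \<Rightarrow> (real^'n) set" where
  "QB G = (SOME B. B \<subseteq> G\<^sup>\<bottom> \<and> independent B \<and> G\<^sup>\<bottom> \<subseteq> span B)"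

definition Qop :: "(real^'n::finite) set \<Rightarrow> real^'n \<Rightarrow> real^'n" where
  "Qop G v = (\<Sum>w\<in>QB G. (w \<bullet> v) *\<^sub>R w)"

lemma QB_props: "QB G \<subseteq> G\<^sup>\<bottom> \<and> independent (QB G) \<and> G\<^sup>\<bottom> \<subseteq> span (QB G)"
proof -
  obtain B where "B \<subseteq> G\<^sup>\<bottom>" "independent B" "G\<^sup>\<bottom> \<subseteq> span B" by (rule basis_exists)
  thus ?thesis unfolding QB_def by (rule someI[where P="\<lambda>B. B \<subseteq> G\<^sup>\<bottom> \<and> independent B \<and> G\<^sup>\<bottom> \<subseteq> span B", OF conjI[OF _ conjI]])
qed

lemma finite_QB: "finite (QB G)"
  using QB_props independent_imp_finite by blast

lemma linear_Qop: "linear (Qop G)"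
  by (rule linearI) (simp_all add: Qop_def inner_add_right scaleR_add_left sum.distrib scaleR_sum_right)

lemma Qop_in_comp: "Qop G v \<in> G\<^sup>\<bottom>"
proof -
  have "QB G \<subseteq> G\<^sup>\<bottom>" using QB_props by blast
  thus ?thesis unfolding Qop_def
    by (intro subspace_sum[OF subspace_orthogonal_comp]) (auto intro: subspace_scale[OF subspace_orthogonal_comp])
qed

lemma Qop_zero_iff:
  fixes G :: "(real^'n::finite) set"
  assumes G: "subspace G"
  shows "Qop G v = 0 \<longleftrightarrow> v \<in> G"
proof
  assume q: "Qop G v = 0"
  have "v \<bullet> Qop G v = (\<Sum>w\<in>QB G. (w \<bullet> v)^2)"
    unfolding Qop_def inner_sum_right inner_scaleR_right
    by (intro sum.cong refl) (simp add: power2_eq_square inner_commute)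
  hence s0: "(\<Sum>w\<in>QB G. (w \<bullet> v)^2) = 0" using q by simp
  have z: "\<forall>w\<in>QB G. w \<bullet> v = 0"
  proof
    fix w assume w: "w \<in> QB G"
    have "(w \<bullet> v)^2 = 0"
      using sum_nonneg_eq_0_iff[OF finite_QB[of G], of "\<lambda>w. (w \<bullet> v)^2"] s0 w by simp
    thus "w \<bullet> v = 0" by simp
  qed
  have sp: "w \<bullet> v = 0" if "w \<in> span (QB G)" for w
  proof -
    have "subspace {x. x \<bullet> v = 0}" by (rule subspace_hyperplane2)
    from span_induct[OF that this] z show ?thesis by simp
  qed
  have "v \<in> G\<^sup>\<bottom>\<^sup>\<bottom>"
    unfolding orthogonal_comp_def mem_Collect_eq real_inner_class.orthogonal_def
  proof (intro ballI)
    fix y assume "y \<in> {x. \<forall>y\<in>G. y \<bullet> x = 0}"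
    hence "y \<in> G\<^sup>\<bottom>" unfolding orthogonal_comp_def real_inner_class.orthogonal_def by simp
    hence "y \<in> span (QB G)" using QB_props by blast
    thus "y \<bullet> v = 0" by (rule sp)
  qed
  thus "v \<in> G" using orthogonal_comp_self[OF G] by simp
next
  assume v: "v \<in> G"
  have "\<forall>w\<in>QB G. w \<bullet> v = 0"
  proof
    fix w assume "w \<in> QB G"
    hence "w \<in> G\<^sup>\<bottom>" using QB_props by blast
    thus "w \<bullet> v = 0" using v unfolding orthogonal_comp_def real_inner_class.orthogonal_def by (simp add: inner_commute)
  qed
  thus "Qop G v = 0" unfolding Qop_def by simp
qed

lemma deg_char:
  fixes G :: "(real^'n::finite) set" and L :: "real^'n \<Rightarrow> real^'n"
  assumes G: "subspace G" and L: "linear L" and LG: "\<And>v. L v \<in> G"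
  shows "Determinants.det (matrix (\<lambda>v. L v + Qop G v)) = 0 \<longleftrightarrow> (\<exists>v. v \<in> G \<and> v \<noteq> 0 \<and> L v = 0)"
proof -
  have lin: "linear (\<lambda>v. L v + Qop G v)" using L linear_Qop by (rule linear_compose_add)
  have key: "L v + Qop G v = 0 \<longleftrightarrow> v \<in> G \<and> L v = 0" for v
  proof
    assume h: "L v + Qop G v = 0"
    have "L v = - Qop G v" using h by (simp add: eq_neg_iff_add_eq_0)
    hence "L v \<in> G\<^sup>\<bottom>" using Qop_in_comp subspace_neg[OF subspace_orthogonal_comp] by metis
    hence "L v = 0" using orthogonal_Int_0[OF G] LG by blast
    with h have "Qop G v = 0" by simp
    with \<open>L v = 0\<close> show "v \<in> G \<and> L v = 0" using Qop_zero_iff[OF G] by simp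
  next
    assume "v \<in> G \<and> L v = 0"
    thus "L v + Qop G v = 0" using Qop_zero_iff[OF G] by simp
  qed
  have "Determinants.det (matrix (\<lambda>v. L v + Qop G v)) = 0 \<longleftrightarrow> \<not> inj (\<lambda>v. L v + Qop G v)"
    using det_nz_iff_inj[OF lin] by blast
  also have "\<dots> \<longleftrightarrow> (\<exists>v. v \<noteq> 0 \<and> L v + Qop G v = 0)"
    using linear_injective_0[OF lin] by auto
  also have "\<dots> \<longleftrightarrow> (\<exists>v. v \<in> G \<and> v \<noteq> 0 \<and> L v = 0)" using key by blast
  finally show ?thesis .
qed

lemma det_tendsto:
  fixes M :: "'a \<Rightarrow> real^'n::finite^'n"
  assumes "\<And>i j. ((\<lambda>x. M x $ i $ j) \<longlongrightarrow> M0 $ i $ j) F"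
  shows "((\<lambda>x. Determinants.det (M x)) \<longlongrightarrow> Determinants.det M0) F"
  unfolding Determinants.det_def by (intro tendsto_intros assms)


abbreviation gv :: "'n::finite reaction \<Rightarrow> real^'n" where
  "gv r \<equiv> rvec (snd r) - rvec (fst r)"

definition dmon :: "real^'n::finite \<Rightarrow> 'n complex \<Rightarrow> real^'n \<Rightarrow> real" where
  "dmon c y h = (\<Sum>i\<in>UNIV. (of_nat (y $ i) * h $ i * (c $ i) ^ (y $ i - 1)) * (\<Prod>j\<in>UNIV - {i}. (c $ j) ^ (y $ j)))"

definition Dop :: "'n::finite reaction set \<Rightarrow> ('n reaction \<Rightarrow> real) \<Rightarrow> real^'n \<Rightarrow> real^'n \<Rightarrow> real^'n" where
  "Dop R \<kappa> c h = (\<Sum>r\<in>R. (\<kappa> r * dmon c (fst r) h) *\<^sub>R gv r)"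

lemma cmonom_deriv: "((\<lambda>c. cmonom c y) has_derivative dmon c y) (at c)"
proof -
  have "((\<lambda>c. \<Prod>i\<in>UNIV. (c $ i) ^ (y $ i)) has_derivative
     (\<lambda>h. \<Sum>i\<in>UNIV. (of_nat (y $ i) * h $ i * (c $ i) ^ (y $ i - 1)) * (\<Prod>j\<in>UNIV - {i}. (c $ j) ^ (y $ j)))) (at c)"
    by (intro has_derivative_prod has_derivative_power bounded_linear_imp_has_derivative bounded_linear_vec_nth)
  thus ?thesis unfolding cmonom_def dmon_def .
qed

lemma formation_rate_deriv: "(formation_rate R \<kappa> has_derivative Dop R \<kappa> c) (at c)"
proof -
  have "((\<lambda>c. \<Sum>r\<in>R. (\<kappa> r * cmonom c (fst r)) *\<^sub>R gv r) has_derivative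
          (\<lambda>h. \<Sum>r\<in>R. (\<kappa> r * dmon c (fst r) h) *\<^sub>R gv r)) (at c)"
    by (intro has_derivative_sum has_derivative_scaleR_left has_derivative_mult_right cmonom_deriv)
  thus ?thesis unfolding formation_rate_def Dop_def[abs_def] by simp
qed

lemma linear_Dop: "linear (Dop R \<kappa> c)"
  using formation_rate_deriv has_derivative_linear by blast

lemma matrix_app:
  fixes f :: "real^'n::finite \<Rightarrow> real^'m::finite"
  assumes "linear f" shows "matrix f *v x = f x"
  using fun_cong[OF matrix_vector_mul(2)[OF assms]] by simp

lemma jacobian_is: "jacobian (formation_rate R \<kappa>) c = matrix (Dop R \<kappa> c)"
proof -
  have fd: "frechet_derivative (formation_rate R \<kappa>) (at c) = Dop R \<kappa> c"
    by (rule frechet_derivative_at[OF formation_rate_deriv[of R \<kappa> c], symmetric])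
  show ?thesis unfolding jacobian_def fd ..
qed

lemma jacobian_eq: "jacobian (formation_rate R \<kappa>) c *v h = Dop R \<kappa> c h"
  unfolding jacobian_is by (rule matrix_app[OF linear_Dop])

lemma gv_in: "r \<in> R \<Longrightarrow> gv r \<in> stoich_subspace R"
  unfolding stoich_subspace_def by (rule span_base) blast

lemma subspace_stoich: "subspace (stoich_subspace R)"
  unfolding stoich_subspace_def by (rule subspace_span)

lemma Dop_in: "finite R \<Longrightarrow> Dop R \<kappa> c h \<in> stoich_subspace R"
  unfolding Dop_def by (intro subspace_sum[OF subspace_stoich] subspace_scale[OF subspace_stoich] gv_in) auto

definition Mop :: "'n::finite reaction set \<Rightarrow> ('n reaction \<Rightarrow> real) \<Rightarrow> ('n \<Rightarrow> real) \<Rightarrow> real^'n \<Rightarrow> real^'n" where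
  "Mop R l u v = (\<Sum>r\<in>R. (l r * (\<Sum>k\<in>UNIV. real (fst r $ k) * u k * v $ k)) *\<^sub>R gv r)"

lemma linear_Mop: "linear (Mop R l u)"
proof (rule linearI)
  fix b1 b2 :: "real^'a"
  show "Mop R l u (b1 + b2) = Mop R l u b1 + Mop R l u b2"
    unfolding Mop_def sum.distrib[symmetric]
    by (rule sum.cong[OF refl]) (simp add: distrib_left sum.distrib scaleR_add_left)
next
  fix a :: real and b1 :: "real^'a"
  show "Mop R l u (a *\<^sub>R b1) = a *\<^sub>R Mop R l u b1"
    unfolding Mop_def scaleR_sum_right
  proof (rule sum.cong[OF refl])
    fix r :: "'a reaction"
    have "(\<Sum>k\<in>UNIV. real (fst r $ k) * u k * (a *\<^sub>R b1) $ k) = a * (\<Sum>k\<in>UNIV. real (fst r $ k) * u k * b1 $ k)"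
      by (simp add: sum_distrib_left mult.left_commute)
    thus "(l r * (\<Sum>k\<in>UNIV. real (fst r $ k) * u k * (a *\<^sub>R b1) $ k)) *\<^sub>R gv r =
         a *\<^sub>R (l r * (\<Sum>k\<in>UNIV. real (fst r $ k) * u k * b1 $ k)) *\<^sub>R gv r"
      by (simp only: scaleR_scaleR mult.left_commute)
  qed
qed

lemma Mop_in: "finite R \<Longrightarrow> Mop R l u h \<in> stoich_subspace R"
  unfolding Mop_def by (intro subspace_sum[OF subspace_stoich] subspace_scale[OF subspace_stoich] gv_in) auto

lemma dmon_nz:
  assumes c: "\<forall>k. c $ k \<noteq> 0"
  shows "dmon c y h = cmonom c y * (\<Sum>k\<in>UNIV. real (y $ k) * (1 / c $ k) * h $ k)"
  unfolding dmon_def sum_distrib_left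
proof (rule sum.cong[OF refl])
  fix i :: 'a
  have cm: "cmonom c y = (c $ i) ^ (y $ i) * (\<Prod>j\<in>UNIV - {i}. (c $ j) ^ (y $ j))"
    unfolding cmonom_def by (rule prod.remove) auto
  show "of_nat (y $ i) * h $ i * c $ i ^ (y $ i - 1) * (\<Prod>j\<in>UNIV - {i}. c $ j ^ y $ j) =
        cmonom c y * (real (y $ i) * (1 / c $ i) * h $ i)"
  proof (cases "y $ i")
    case 0 thus ?thesis by simp
  next
    case (Suc n)
    have "c $ i ^ (y $ i) = c $ i * c $ i ^ (y $ i - 1)" using Suc by simp
    thus ?thesis unfolding cm using c[rule_format, of i] by (simp add: field_simps)
  qed
qed

lemma Dop_Mop:
  assumes c: "\<forall>k. c $ k \<noteq> 0"
  shows "Dop R \<kappa> c h = Mop R (\<lambda>r. \<kappa> r * cmonom c (fst r)) (\<lambda>k. 1 / c $ k) h"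
  unfolding Dop_def Mop_def dmon_nz[OF c] by (simp add: mult.assoc)


lemma sum_nth_set: "distinct xs \<Longrightarrow> (\<Sum>i<length xs. f (xs ! i)) = sum f (set xs)"
  by (rule sum.reindex_bij_betw[OF bij_betw_nth]) auto

definition FI :: "(nat \<Rightarrow> real^'n::finite) \<Rightarrow> nat \<Rightarrow> bool" where
  "FI w s \<longleftrightarrow> (\<forall>a. (\<Sum>j<s. a j *\<^sub>R w j) = 0 \<longrightarrow> (\<forall>j<s. a j = 0))"

definition RFI :: "'n set \<Rightarrow> (nat \<Rightarrow> real^'n::finite) \<Rightarrow> nat \<Rightarrow> bool" where
  "RFI K w s \<longleftrightarrow> (\<forall>a. (\<forall>k\<in>K. (\<Sum>j<s. a j * w j $ k) = 0) \<longrightarrow> (\<forall>j<s. a j = 0))"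

lemma RFI_FI: "RFI K w s \<Longrightarrow> FI w s"
  unfolding RFI_def FI_def
proof (rule allI, rule impI)
  fix a assume H: "\<forall>a. (\<forall>k\<in>K. (\<Sum>j<s. a j * w j $ k) = 0) \<longrightarrow> (\<forall>j<s. a j = 0)"
    and z: "(\<Sum>j<s. a j *\<^sub>R w j) = 0"
  have "\<forall>k\<in>K. (\<Sum>j<s. a j * w j $ k) = 0"
  proof
    fix k assume "k \<in> K"
    have "(\<Sum>j<s. a j *\<^sub>R w j) $ k = 0" using z by simp
    thus "(\<Sum>j<s. a j * w j $ k) = 0" by simp
  qed
  with H show "\<forall>j<s. a j = 0" by blast
qed

lemma FI_inj: assumes "FI w s" shows "inj_on w {..<s}"
proof (rule inj_onI, rule ccontr)
  fix i j assume ij: "i \<in> {..<s}" "j \<in> {..<s}" "w i = w j" "i \<noteq> j"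
  define a where "a = (\<lambda>k. if k = i then 1 else if k = j then -1 else (0::real))"
  have "(\<Sum>k<s. a k *\<^sub>R w k) = (\<Sum>k\<in>{i,j}. a k *\<^sub>R w k)"
    by (rule sum.mono_neutral_right) (use ij in \<open>auto simp: a_def\<close>)
  also have "\<dots> = 0" using ij by (simp add: a_def)
  finally have "\<forall>k<s. a k = 0" using assms unfolding FI_def by blast
  thus False using ij by (auto simp: a_def)
qed

lemma FI_indep: assumes "FI w s" shows "independent (w ` {..<s})"
  unfolding independent_explicit
proof (intro conjI allI impI ballI)
  show "finite (w ` {..<s})" by simp
  fix c v assume z: "(\<Sum>v\<in>w ` {..<s}. c v *\<^sub>R v) = 0" and v: "v \<in> w ` {..<s}"
  have "(\<Sum>v\<in>w ` {..<s}. c v *\<^sub>R v) = (\<Sum>j<s. c (w j) *\<^sub>R w j)"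
    by (rule sum.reindex[OF FI_inj[OF assms], unfolded comp_def])
  with z have "\<forall>j<s. c (w j) = 0" using assms unfolding FI_def by auto
  thus "c v = 0" using v by auto
qed

lemma FI_span:
  assumes fi: "FI w s" and wV: "\<forall>j<s. w j \<in> V" and d: "dim V \<le> s" and v: "v \<in> V"
  shows "\<exists>a. v = (\<Sum>j<s. a j *\<^sub>R w j)"
proof -
  have card: "card (w ` {..<s}) = s" using card_image[OF FI_inj[OF fi]] by simp
  have "V \<subseteq> span (w ` {..<s})"
    by (rule card_ge_dim_independent) (use wV FI_indep[OF fi] d card in auto)
  with v have "v \<in> span (w ` {..<s})" by blast
  then obtain u where u: "v = (\<Sum>x\<in>w ` {..<s}. u x *\<^sub>R x)"
    unfolding span_finite[OF finite_imageI[OF finite_lessThan]] by auto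
  also have "\<dots> = (\<Sum>j<s. u (w j) *\<^sub>R w j)"
    by (rule sum.reindex[OF FI_inj[OF fi], unfolded comp_def])
  finally show ?thesis by (intro exI[of _ "\<lambda>j. u (w j)"])
qed

lemma detm_RFI:
  assumes kr: "distinct kr" "set kr = K" "length kr = s"
  shows "detm s (\<lambda>i j. w j $ (kr ! i)) \<noteq> 0 \<longleftrightarrow> RFI K w s"
  unfolding detm_nz_iff RFI_def
proof (intro iff_allI)
  fix a
  have "(\<forall>i<s. (\<Sum>j<s. w j $ (kr ! i) * a j) = 0) \<longleftrightarrow> (\<forall>k\<in>K. (\<Sum>j<s. a j * w j $ k) = 0)"
  proof
    assume "\<forall>i<s. (\<Sum>j<s. w j $ (kr ! i) * a j) = 0"
    thus "\<forall>k\<in>K. (\<Sum>j<s. a j * w j $ k) = 0" using kr by (auto simp: in_set_conv_nth mult.commute)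
  next
    assume "\<forall>k\<in>K. (\<Sum>j<s. a j * w j $ k) = 0"
    thus "\<forall>i<s. (\<Sum>j<s. w j $ (kr ! i) * a j) = 0" using kr by (auto simp: mult.commute)
  qed
  thus "((\<forall>i<s. (\<Sum>j<s. w j $ (kr ! i) * a j) = 0) \<longrightarrow> (\<forall>j<s. a j = 0)) =
        ((\<forall>k\<in>K. (\<Sum>j<s. a j * w j $ k) = 0) \<longrightarrow> (\<forall>j<s. a j = 0))" by simp
qed

lemma detm_rows:
  assumes kr: "distinct kr" "set kr = K" "length kr = s"
    and d: "detm s (\<lambda>i j. w j $ (kr ! i)) \<noteq> 0"
    and b: "\<forall>j<s. (\<Sum>k\<in>K. b k * w j $ k) = 0"
  shows "\<forall>k\<in>K. b k = 0"
proof -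
  have "\<forall>j<s. (\<Sum>i<s. b (kr ! i) * w j $ (kr ! i)) = 0"
  proof (intro allI impI)
    fix j assume j: "j < s"
    have "(\<Sum>i<s. b (kr ! i) * w j $ (kr ! i)) = (\<Sum>k\<in>K. b k * w j $ k)"
      using sum_nth_set[OF kr(1), of "\<lambda>k. b k * w j $ k"] kr(2,3) by simp
    thus "(\<Sum>i<s. b (kr ! i) * w j $ (kr ! i)) = 0" using b j by simp
  qed
  hence "\<forall>i<s. b (kr ! i) = 0"
    using d[unfolded detm_nz_iff_T, rule_format, of "\<lambda>i. b (kr ! i)"] by simp
  thus ?thesis using kr by (auto simp: in_set_conv_nth)
qed


lemma degen_iff: "degenerate_at R \<kappa> c \<longleftrightarrow> (\<exists>v. v \<in> stoich_subspace R \<and> v \<noteq> 0 \<and> Dop R \<kappa> c v = 0)"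
proof -
  let ?S = "{v. Dop R \<kappa> c v = 0} \<inter> stoich_subspace R"
  have z: "0 \<in> ?S"
  proof -
    have "Dop R \<kappa> c 0 = 0" by (rule linear_0[OF linear_Dop])
    moreover have "0 \<in> stoich_subspace R" by (rule subspace_0[OF subspace_stoich])
    ultimately show ?thesis by simp
  qed
  have "?S \<noteq> {0} \<longleftrightarrow> (\<exists>v. v \<in> ?S \<and> v \<noteq> 0)"
  proof
    assume "?S \<noteq> {0}" thus "\<exists>v. v \<in> ?S \<and> v \<noteq> 0" using z by blast
  next
    assume "\<exists>v. v \<in> ?S \<and> v \<noteq> 0" thus "?S \<noteq> {0}" by blast
  qed
  thus ?thesis unfolding degenerate_at_def jacobian_eq by (simp; blast)
qed

lemma cmonom_pos: "positive_vec c \<Longrightarrow> cmonom c y > 0"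
  unfolding cmonom_def positive_vec_def by (intro prod_pos) auto

lemma dir1:
  fixes R :: "'n::finite reaction set" and K :: "'n set"
  assumes fin: "finite R" and rs: "distinct rs" "set rs \<subseteq> R" "length rs = s"
    and sdim: "stoich_dim R = s"
    and HY: "\<forall>b. (\<forall>j<s. (\<Sum>k\<in>K. b k * rvec (fst (rs!j)) $ k) = 0) \<longrightarrow> (\<forall>k\<in>K. b k = 0)"
    and HG: "RFI K (\<lambda>j. gv (rs!j)) s"
  shows "\<exists>\<kappa> c. rate_vector R \<kappa> \<and> positive_vec c \<and> \<not> degenerate_at R \<kappa> c"
proof -
  define ind where "ind r = (if r \<in> set rs then 1 else (0::real))" for r :: "'n reaction"
  define indK where "indK k = (if k \<in> K then 1 else (0::real))" for k :: 'n
  define l where "l e r = e + (1 - e) * ind r" for e :: real and r :: "'n reaction"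
  define u where "u e k = e + (1 - e) * indK k" for e :: real and k :: 'n
  let ?G = "stoich_subspace R"
  have L0: "v = 0" if v: "v \<in> ?G" and Mv: "Mop R (l 0) (u 0) v = 0" for v
  proof -
    define X where "X r = (\<Sum>k\<in>K. rvec (fst r) $ k * v $ k)" for r :: "'n reaction"
    have inner: "(\<Sum>k\<in>UNIV. real (fst r $ k) * u 0 k * v $ k) = X r" for r :: "'n reaction"
      unfolding X_def
      by (rule sum.mono_neutral_cong_right) (auto simp: u_def indK_def rvec_def)
    have "Mop R (l 0) (u 0) v = (\<Sum>r\<in>set rs. X r *\<^sub>R gv r)"
      unfolding Mop_def inner
      by (rule sum.mono_neutral_cong_right[OF fin rs(2)]) (auto simp: l_def ind_def)
    also have "\<dots> = (\<Sum>j<s. X (rs!j) *\<^sub>R gv (rs!j))"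
      using sum_nth_set[OF rs(1), of "\<lambda>r. X r *\<^sub>R gv r"] rs(3) by simp
    finally have "(\<Sum>j<s. X (rs!j) *\<^sub>R gv (rs!j)) = 0" using Mv by simp
    hence X0: "\<forall>j<s. X (rs!j) = 0"
      using spec[OF RFI_FI[OF HG, unfolded FI_def], of "\<lambda>j. X (rs!j)"] by simp
    have vK: "\<forall>k\<in>K. v $ k = 0"
    proof -
      have "\<forall>j<s. (\<Sum>k\<in>K. v $ k * rvec (fst (rs!j)) $ k) = 0"
        using X0 by (simp add: X_def mult.commute)
      thus ?thesis using spec[OF HY, of "\<lambda>k. v $ k"] by simp
    qed
    have "\<exists>a. v = (\<Sum>j<s. a j *\<^sub>R gv (rs!j))"
    proof (rule FI_span[OF RFI_FI[OF HG]])
      show "\<forall>j<s. gv (rs ! j) \<in> ?G" using rs by (auto intro!: gv_in)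
      show "dim ?G \<le> s" using sdim unfolding stoich_dim_def by simp
    qed (rule v)
    then obtain a where a: "v = (\<Sum>j<s. a j *\<^sub>R gv (rs!j))" by blast
    have "\<forall>k\<in>K. (\<Sum>j<s. a j * gv (rs!j) $ k) = 0"
    proof
      fix k assume k: "k \<in> K"
      have "(\<Sum>j<s. a j * gv (rs!j) $ k) = v $ k" unfolding a by simp
      thus "(\<Sum>j<s. a j * gv (rs!j) $ k) = 0" using vK k by simp
    qed
    hence "\<forall>j<s. a j = 0" using spec[OF HG[unfolded RFI_def], of a] by simp
    thus "v = 0" unfolding a by simp
  qed
  have det0: "Determinants.det (matrix (\<lambda>v. Mop R (l 0) (u 0) v + Qop ?G v)) \<noteq> 0"
    using deg_char[OF subspace_stoich linear_Mop Mop_in[OF fin]] L0 by blast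
  have tend: "((\<lambda>e. Determinants.det (matrix (\<lambda>v. Mop R (l e) (u e) v + Qop ?G v))) \<longlongrightarrow>
      Determinants.det (matrix (\<lambda>v. Mop R (l 0) (u 0) v + Qop ?G v))) (at_right 0)"
  proof (rule det_tendsto)
    fix i j
    let ?F = "\<lambda>e. matrix (\<lambda>v. Mop R (l e) (u e) v + Qop ?G v) $ i $ j"
    have "continuous (at_right 0) ?F"
      unfolding matrix_def Mop_def l_def u_def by (simp, intro continuous_intros)
    thus "(?F \<longlongrightarrow> ?F 0) (at_right 0)" unfolding continuous_within by simp
  qed
  have ev: "eventually (\<lambda>e. Determinants.det (matrix (\<lambda>v. Mop R (l e) (u e) v + Qop ?G v)) \<noteq> 0 \<and> e \<in> {0<..<1}) (at_right (0::real))"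
    using tendsto_imp_eventually_ne[OF tend det0] eventually_at_right_real[of 0 1]
    by (rule eventually_conj) simp
  then obtain e where e: "Determinants.det (matrix (\<lambda>v. Mop R (l e) (u e) v + Qop ?G v)) \<noteq> 0" "0 < e" "e < 1"
    using eventually_happens'[OF trivial_limit_at_right_real ev] by auto
  have upos: "u e k > 0" for k using e by (auto simp: u_def indK_def)
  have lpos: "l e r > 0" for r using e by (auto simp: l_def ind_def)
  define c :: "real^'n" where "c = (\<chi> k. 1 / u e k)"
  have cpos: "positive_vec c" using upos unfolding positive_vec_def c_def by simp
  define \<kappa> where "\<kappa> r = l e r / cmonom c (fst r)" for r
  have rv: "rate_vector R \<kappa>" unfolding rate_vector_def \<kappa>_def using lpos cmonom_pos[OF cpos] by simp
  have cnz: "\<forall>k. c $ k \<noteq> 0" using cpos unfolding positive_vec_def by (metis less_irrefl)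
  have "Dop R \<kappa> c = Mop R (\<lambda>r. \<kappa> r * cmonom c (fst r)) (\<lambda>k. 1 / c $ k)"
    using Dop_Mop[OF cnz] by (intro ext) simp
  also have "(\<lambda>r. \<kappa> r * cmonom c (fst r)) = l e"
  proof (intro ext)
    fix r :: "'n reaction"
    have "cmonom c (fst r) > 0" by (rule cmonom_pos[OF cpos])
    thus "\<kappa> r * cmonom c (fst r) = l e r" by (simp add: \<kappa>_def)
  qed
  also have "(\<lambda>k. 1 / c $ k) = u e" by (intro ext) (simp add: c_def)
  finally have D: "Dop R \<kappa> c = Mop R (l e) (u e)" .
  have "\<not> degenerate_at R \<kappa> c"
    unfolding degen_iff D using deg_char[OF subspace_stoich linear_Mop Mop_in[OF fin]] e(1) by blast
  with rv cpos show ?thesis by blast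
qed


lemma detm_cong: "(\<forall>i<s. \<forall>j<s. M i j = N i j) \<Longrightarrow> detm s M = detm s N"
  unfolding detm_def
  by (intro sum.cong refl arg_cong2[where f="(*)"] prod.cong) (auto dest: permutes_in_image)

lemma FI_list:
  assumes d: "distinct xs" and ind: "independent (set xs)"
  shows "FI (\<lambda>j. xs ! j) (length xs)"
  unfolding FI_def
proof (intro allI impI)
  fix a j assume z: "(\<Sum>j<length xs. a j *\<^sub>R xs ! j) = 0" and j: "j < length xs"
  have bij: "bij_betw ((!) xs) {..<length xs} (set xs)" by (rule bij_betw_nth[OF d]) auto
  define c where "c v = a (inv_into {..<length xs} ((!) xs) v)" for v
  have cj: "c (xs ! i) = a i" if "i < length xs" for i
    using bij_betw_inv_into_left[OF bij] that by (simp add: c_def)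
  have "(\<Sum>v\<in>set xs. c v *\<^sub>R v) = (\<Sum>i<length xs. c (xs!i) *\<^sub>R xs ! i)"
    using sum_nth_set[OF d, of "\<lambda>v. c v *\<^sub>R v"] by simp
  also have "\<dots> = (\<Sum>i<length xs. a i *\<^sub>R xs ! i)" by (intro sum.cong) (auto simp: cj)
  finally have "(\<Sum>v\<in>set xs. c v *\<^sub>R v) = 0" using z by simp
  hence "\<forall>v\<in>set xs. c v = 0" using ind unfolding independent_explicit by blast
  hence "c (xs ! j) = 0" using j by simp
  thus "a j = 0" using cj[OF j] by simp
qed

lemma basis_list:
  fixes G :: "(real^'n::finite) set"
  assumes "dim G = s"
  shows "\<exists>ph. FI ph s \<and> (\<forall>i<s. ph i \<in> G)"
proof -
  obtain B where B: "B \<subseteq> G" "independent B" "G \<subseteq> span B" "card B = dim G" by (rule basis_exists)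
  have "finite B" using B(2) independent_imp_finite by blast
  then obtain xs where xs: "set xs = B" "distinct xs" using finite_distinct_list by blast
  have "length xs = s" using distinct_card[OF xs(2)] xs(1) B(4) assms by simp
  thus ?thesis using FI_list[OF xs(2)] xs B by (intro exI[of _ "\<lambda>j. xs ! j"]) auto
qed

lemma core2:
  fixes R :: "'n::finite reaction set"
  assumes fin: "finite R" and sdim: "stoich_dim R = s"
    and lnz: "\<forall>r\<in>R. l r \<noteq> 0" and unz: "\<forall>k. u k \<noteq> 0"
    and inj: "\<forall>v\<in>stoich_subspace R. Mop R l u v = 0 \<longrightarrow> v = 0"
  shows "\<exists>rs K. distinct rs \<and> set rs \<subseteq> R \<and> length rs = s \<and> card K = s \<and>
     RFI K (\<lambda>j. rvec (fst (rs!j))) s \<and> RFI K (\<lambda>j. gv (rs!j)) s"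
proof -
  let ?G = "stoich_subspace R"
  obtain rl where rl: "set rl = R" "distinct rl" using finite_distinct_list[OF fin] by blast
  define m where "m = length rl"
  obtain sl :: "'n list" where sl: "set sl = UNIV" "distinct sl" using finite_distinct_list[of "UNIV::'n set"] by auto
  define n where "n = length sl"
  obtain ph where ph: "FI ph s" "\<forall>i<s. ph i \<in> ?G"
    using basis_list[of ?G s] sdim unfolding stoich_dim_def by blast
  have dimG: "dim ?G \<le> s" using sdim unfolding stoich_dim_def by simp
  have phspan: "\<exists>b. v = (\<Sum>i<s. b i *\<^sub>R ph i)" if "v \<in> ?G" for v
    using FI_span[OF ph(1) ph(2) dimG that] .
  define A where "A i j = (ph i \<bullet> gv (rl!j)) * l (rl!j)" for i j
  define B where "B j i = (\<Sum>k\<in>UNIV. real (fst (rl!j) $ k) * u k * ph i $ k)" for j i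
  have Mop_idx: "Mop R l u v = (\<Sum>j<m. (l (rl!j) * (\<Sum>k\<in>UNIV. real (fst (rl!j) $ k) * u k * v $ k)) *\<^sub>R gv (rl!j))" for v
    unfolding Mop_def m_def using sum_nth_set[OF rl(2), of "\<lambda>r. (l r * (\<Sum>k\<in>UNIV. real (fst r $ k) * u k * v $ k)) *\<^sub>R gv r"] rl(1)
    by simp
  have AB: "(\<Sum>j<m. A i j * B j i') = ph i \<bullet> Mop R l u (ph i')" for i i'
    unfolding Mop_idx inner_sum_right A_def B_def by (intro sum.cong) (auto simp: mult_ac)
  have detAB: "detm s (\<lambda>i k. \<Sum>j=0..<m. A i j * B j k) \<noteq> 0"
    unfolding detm_nz_iff
  proof (intro allI impI)
    fix a j assume H: "\<forall>i<s. (\<Sum>k<s. (\<Sum>j = 0..<m. A i j * B j k) * a k) = 0" and j: "j < s"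
    define w where "w = (\<Sum>k<s. a k *\<^sub>R ph k)"
    have wG: "w \<in> ?G" unfolding w_def using ph(2)
      by (intro subspace_sum[OF subspace_stoich] subspace_scale[OF subspace_stoich]) auto
    have Mw: "Mop R l u w = (\<Sum>k<s. a k *\<^sub>R Mop R l u (ph k))"
      unfolding w_def linear_sum[OF linear_Mop] linear_cmul[OF linear_Mop] ..
    have orth: "ph i \<bullet> Mop R l u w = 0" if i: "i < s" for i
    proof -
      have "ph i \<bullet> Mop R l u w = (\<Sum>k<s. (\<Sum>j = 0..<m. A i j * B j k) * a k)"
        unfolding Mw inner_sum_right atLeast0LessThan AB by (simp add: mult.commute)
      thus ?thesis using H i by simp
    qed
    obtain b where b: "Mop R l u w = (\<Sum>i<s. b i *\<^sub>R ph i)" using phspan[OF Mop_in[OF fin]] by blast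
    have "Mop R l u w \<bullet> Mop R l u w = (\<Sum>i<s. b i * (ph i \<bullet> Mop R l u w))"
      by (subst (1) b) (simp add: inner_sum_left)
    also have "\<dots> = 0" using orth by simp
    finally have "Mop R l u w = 0" by simp
    hence "w = 0" using inj wG by simp
    hence "\<forall>k<s. a k = 0" using spec[OF ph(1)[unfolded FI_def], of a] unfolding w_def by simp
    thus "a j = 0" using j by simp
  qed
  obtain f where f: "\<forall>i<s. f i < m" "inj_on f {0..<s}"
    "detm s (\<lambda>i k. A i (f k)) \<noteq> 0" "detm s (\<lambda>i k. B (f i) k) \<noteq> 0"
    using cauchy_binet_exists[OF detAB] by blast
  define rs where "rs = map (\<lambda>j. rl ! f j) [0..<s]"
  have rs_nth: "rs ! j = rl ! f j" if "j < s" for j using that by (simp add: rs_def)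
  have rs_len: "length rs = s" by (simp add: rs_def)
  have rs_set: "set rs \<subseteq> R"
  proof
    fix x assume "x \<in> set rs"
    then obtain j where j: "j < s" "x = rl ! f j" by (auto simp: rs_def)
    have "f j < length rl" using f(1) j(1) by (simp add: m_def)
    hence "x \<in> set rl" using j(2) nth_mem by simp
    thus "x \<in> R" using rl(1) by simp
  qed
  have rs_dist: "distinct rs"
  proof -
    have i1: "inj_on (\<lambda>j. rl ! j) (f ` {0..<s})"
      by (rule inj_on_nth[OF rl(2)]) (use f(1) m_def in auto)
    have "inj_on ((\<lambda>j. rl ! j) \<circ> f) {0..<s}" by (rule comp_inj_on[OF f(2) i1])
    hence "inj_on (\<lambda>j. rl ! f j) (set [0..<s])" by (simp add: comp_def)
    thus ?thesis unfolding rs_def by (simp add: distinct_map)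
  qed
  have lrs: "l (rs ! j) \<noteq> 0" if "j < s" for j using lnz rs_set rs_len that nth_mem by blast
  have lrs': "l (rl ! f j) \<noteq> 0" if "j < s" for j using lrs[OF that] rs_nth[OF that] by simp
  have FIg: "FI (\<lambda>j. gv (rs!j)) s"
    unfolding FI_def
  proof (intro allI impI)
    fix a j assume z: "(\<Sum>j<s. a j *\<^sub>R gv (rs ! j)) = 0" and j: "j < s"
    have "\<forall>i<s. (\<Sum>k<s. A i (f k) * (a k / l (rs ! k))) = 0"
    proof (intro allI impI)
      fix i assume "i < s"
      have "(\<Sum>k<s. A i (f k) * (a k / l (rs ! k))) = (\<Sum>k<s. ph i \<bullet> (a k *\<^sub>R gv (rs ! k)))"
        by (intro sum.cong) (auto simp: A_def rs_nth lrs')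
      also have "\<dots> = ph i \<bullet> (\<Sum>k<s. a k *\<^sub>R gv (rs ! k))" by (simp add: inner_sum_right)
      finally show "(\<Sum>k<s. A i (f k) * (a k / l (rs ! k))) = 0" using z by simp
    qed
    hence "\<forall>k<s. a k / l (rs ! k) = 0" using spec[OF f(3)[unfolded detm_nz_iff], of "\<lambda>k. a k / l (rs ! k)"] by simp
    thus "a j = 0" using j lrs[OF j] by auto
  qed
  define P where "P j k = real (fst (rs!j) $ (sl!k)) * u (sl!k)" for j k
  define Ph where "Ph k i = ph i $ (sl!k)" for k i
  have PB: "detm s (\<lambda>j i. \<Sum>k=0..<n. P j k * Ph k i) \<noteq> 0"
  proof -
    have "detm s (\<lambda>j i. \<Sum>k=0..<n. P j k * Ph k i) = detm s (\<lambda>i k. B (f i) k)"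
    proof (rule detm_cong, intro allI impI)
      fix j i assume j: "j < s" and i: "i < s"
      have "(\<Sum>k=0..<n. P j k * Ph k i) = (\<Sum>k\<in>UNIV. real (fst (rs!j) $ k) * u k * ph i $ k)"
        unfolding P_def Ph_def n_def atLeast0LessThan
        using sum_nth_set[OF sl(2), of "\<lambda>k. real (fst (rs!j) $ k) * u k * ph i $ k"] sl(1)
        by (simp add: mult_ac)
      also have "\<dots> = B (f j) i" using j by (simp add: B_def rs_nth)
      finally show "(\<Sum>k=0..<n. P j k * Ph k i) = B (f j) i" .
    qed
    thus ?thesis using f(4) by simp
  qed
  obtain e where e: "\<forall>i<s. e i < n" "inj_on e {0..<s}"
    "detm s (\<lambda>j i. P j (e i)) \<noteq> 0" "detm s (\<lambda>i' i. Ph (e i') i) \<noteq> 0"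
    using cauchy_binet_exists[OF PB] by blast
  define K where "K = (\<lambda>i. sl ! e i) ` {..<s}"
  have injK: "inj_on (\<lambda>i. sl ! e i) {..<s}"
  proof (rule inj_onI)
    fix i j assume ij: "i \<in> {..<s}" "j \<in> {..<s}" "sl ! e i = sl ! e j"
    hence "e i = e j" using nth_eq_iff_index_eq[OF sl(2)] e(1) n_def by auto
    thus "i = j" using e(2) ij by (auto simp: inj_on_def)
  qed
  have cardK: "card K = s" unfolding K_def using card_image[OF injK] by simp
  have RY: "RFI K (\<lambda>j. rvec (fst (rs!j))) s"
    unfolding RFI_def
  proof (intro allI impI)
    fix a j assume H: "\<forall>k\<in>K. (\<Sum>j<s. a j * rvec (fst (rs ! j)) $ k) = 0" and j: "j < s"
    have "\<forall>i<s. (\<Sum>j<s. a j * P j (e i)) = 0"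
    proof (intro allI impI)
      fix i assume i: "i < s"
      have "(\<Sum>j<s. a j * P j (e i)) = u (sl ! e i) * (\<Sum>j<s. a j * rvec (fst (rs ! j)) $ (sl ! e i))"
        unfolding P_def sum_distrib_left by (intro sum.cong) (auto simp: rvec_def)
      also have "\<dots> = 0" using H i by (simp add: K_def)
      finally show "(\<Sum>j<s. a j * P j (e i)) = 0" .
    qed
    thus "a j = 0" using spec[OF e(3)[unfolded detm_nz_iff_T], of a] j by simp
  qed
  have vanish: "v = 0" if v: "v \<in> ?G" and vK: "\<forall>k\<in>K. v $ k = 0" for v
  proof -
    obtain b where b: "v = (\<Sum>i<s. b i *\<^sub>R ph i)" using phspan[OF v] by blast
    have "\<forall>i'<s. (\<Sum>i<s. Ph (e i') i * b i) = 0"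
    proof (intro allI impI)
      fix i' assume i': "i' < s"
      have "(\<Sum>i<s. Ph (e i') i * b i) = v $ (sl ! e i')" unfolding b Ph_def by (simp add: mult.commute)
      thus "(\<Sum>i<s. Ph (e i') i * b i) = 0" using vK i' by (simp add: K_def)
    qed
    hence "\<forall>i<s. b i = 0" using spec[OF e(4)[unfolded detm_nz_iff], of b] by simp
    thus "v = 0" unfolding b by simp
  qed
  have RG: "RFI K (\<lambda>j. gv (rs!j)) s"
    unfolding RFI_def
  proof (intro allI impI)
    fix a j assume H: "\<forall>k\<in>K. (\<Sum>j<s. a j * gv (rs ! j) $ k) = 0" and j: "j < s"
    define w where "w = (\<Sum>j<s. a j *\<^sub>R gv (rs ! j))"
    have wG: "w \<in> ?G" unfolding w_def using rs_set rs_len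
      by (intro subspace_sum[OF subspace_stoich] subspace_scale[OF subspace_stoich] gv_in) auto
    have "\<forall>k\<in>K. w $ k = 0" using H by (simp add: w_def)
    hence "w = 0" using vanish[OF wG] by blast
    hence "\<forall>j<s. a j = 0" using spec[OF FIg[unfolded FI_def], of a] unfolding w_def by simp
    thus "a j = 0" using j by simp
  qed
  show ?thesis using rs_dist rs_set rs_len cardK RY RG by blast
qed


lemma cmonom_nz: "\<forall>k. c $ k \<noteq> 0 \<Longrightarrow> cmonom c y \<noteq> 0"
  unfolding cmonom_def by (simp add: prod_zero_iff)

lemma dir2:
  fixes R :: "'n::finite reaction set"
  assumes fin: "finite R" and sdim: "stoich_dim R = s"
    and kap: "rate_vector R \<kappa>" and nd: "\<not> degenerate_at R \<kappa> c"
  shows "\<exists>rs K. distinct rs \<and> set rs \<subseteq> R \<and> length rs = s \<and> card K = s \<and>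
     RFI K (\<lambda>j. rvec (fst (rs!j))) s \<and> RFI K (\<lambda>j. gv (rs!j)) s"
proof -
  let ?G = "stoich_subspace R"
  have DC: "Determinants.det (matrix (\<lambda>v. Dop R \<kappa> c' v + Qop ?G v)) \<noteq> 0 \<longleftrightarrow> \<not> degenerate_at R \<kappa> c'" for c'
    unfolding degen_iff using deg_char[OF subspace_stoich linear_Dop Dop_in[OF fin]] by blast
  have detc: "Determinants.det (matrix (\<lambda>v. Dop R \<kappa> c v + Qop ?G v)) \<noteq> 0" using DC nd by blast
  define ct where "ct t = (\<chi> k. c $ k + t)" for t :: real
  have ct0: "ct 0 = c" by (simp add: ct_def vec_eq_iff)
  have tend: "((\<lambda>t. Determinants.det (matrix (\<lambda>v. Dop R \<kappa> (ct t) v + Qop ?G v))) \<longlongrightarrow>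
      Determinants.det (matrix (\<lambda>v. Dop R \<kappa> c v + Qop ?G v))) (at_right 0)"
  proof (rule det_tendsto)
    fix i j
    let ?F = "\<lambda>t. matrix (\<lambda>v. Dop R \<kappa> (ct t) v + Qop ?G v) $ i $ j"
    have "continuous (at_right 0) ?F"
      unfolding matrix_def Dop_def dmon_def ct_def by (simp, intro continuous_intros)
    hence "(?F \<longlongrightarrow> ?F 0) (at_right 0)" unfolding continuous_within by simp
    thus "(?F \<longlongrightarrow> matrix (\<lambda>v. Dop R \<kappa> c v + Qop ?G v) $ i $ j) (at_right 0)" using ct0 by simp
  qed
  have ev2: "eventually (\<lambda>t. \<forall>k. c $ k + t \<noteq> 0) (at_right (0::real))"
  proof (rule eventually_all_finite)
    fix k
    show "eventually (\<lambda>t. c $ k + t \<noteq> 0) (at_right (0::real))"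
    proof (cases "c $ k = 0")
      case True
      show ?thesis using eventually_at_right_less[of "0::real"] by eventually_elim (simp add: True)
    next
      case False
      have "((\<lambda>t. c $ k + t) \<longlongrightarrow> c $ k + 0) (at_right 0)" by (intro tendsto_intros)
      thus ?thesis using tendsto_imp_eventually_ne[of "\<lambda>t. c $ k + t" "c $ k" _ 0] False by simp
    qed
  qed
  have ev: "eventually (\<lambda>t. Determinants.det (matrix (\<lambda>v. Dop R \<kappa> (ct t) v + Qop ?G v)) \<noteq> 0 \<and> (\<forall>k. c $ k + t \<noteq> 0)) (at_right (0::real))"
    using tendsto_imp_eventually_ne[OF tend detc] ev2 by (rule eventually_conj)
  then obtain t where t: "Determinants.det (matrix (\<lambda>v. Dop R \<kappa> (ct t) v + Qop ?G v)) \<noteq> 0" "\<forall>k. c $ k + t \<noteq> 0"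
    using eventually_happens'[OF trivial_limit_at_right_real ev] by auto
  define c' where "c' = ct t"
  have cnz: "\<forall>k. c' $ k \<noteq> 0" using t(2) by (simp add: c'_def ct_def)
  have nd': "\<not> degenerate_at R \<kappa> c'" using DC t(1) unfolding c'_def by blast
  define l where "l r = \<kappa> r * cmonom c' (fst r)" for r :: "'n reaction"
  define u where "u k = 1 / c' $ k" for k :: 'n
  have D: "Dop R \<kappa> c' = Mop R l u" unfolding l_def[abs_def] u_def[abs_def] using Dop_Mop[OF cnz] by (intro ext) simp
  have lnz: "\<forall>r\<in>R. l r \<noteq> 0"
    using kap cmonom_nz[OF cnz] unfolding rate_vector_def l_def by (metis less_irrefl mult_eq_0_iff)
  have unz: "\<forall>k. u k \<noteq> 0" using cnz by (simp add: u_def)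
  have inj: "\<forall>v\<in>?G. Mop R l u v = 0 \<longrightarrow> v = 0" using nd' unfolding degen_iff D by blast
  show ?thesis by (rule core2[OF fin sdim lnz unz inj])
qed


lemma noninj:
  fixes R :: "'n::finite reaction set"
  assumes fin: "finite R" and deg: "degenerate_at R (\<lambda>r. 1) (\<chi> k. 1)"
  shows "\<not> injective_crn R"
proof -
  let ?G = "stoich_subspace R"
  define c1 :: "real^'n" where "c1 = (\<chi> k. 1)"
  have cnz: "\<forall>k. c1 $ k \<noteq> 0" by (simp add: c1_def)
  have cm1: "cmonom c1 y = 1" for y by (simp add: cmonom_def c1_def)
  have D: "Dop R (\<lambda>r. 1) c1 v = (\<Sum>r\<in>R. (\<Sum>k\<in>UNIV. real (fst r $ k) * v $ k) *\<^sub>R gv r)" for v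
    unfolding Dop_Mop[OF cnz] Mop_def cm1 by (simp add: c1_def)
  obtain v where v: "v \<in> ?G" "v \<noteq> 0" "Dop R (\<lambda>r. 1) c1 v = 0"
    using deg unfolding degen_iff c1_def by blast
  define tr where "tr r = (\<Sum>k\<in>UNIV. real (fst r $ k) * v $ k)" for r :: "'n reaction"
  have sum0: "(\<Sum>r\<in>R. tr r *\<^sub>R gv r) = 0" using v(3) D unfolding tr_def by simp
  define bb where "bb k = (if v $ k = 0 then 1 else v $ k / (exp (v $ k) - 1))" for k
  define b :: "real^'n" where "b = (\<chi> k. bb k)"
  define a :: "real^'n" where "a = (\<chi> k. bb k * exp (v $ k))"
  have bpos: "bb k > 0" for k
  proof (cases "v $ k = 0")
    case False
    show ?thesis
    proof (cases "v $ k > 0")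
      case True
      hence "exp (v $ k) > 1" by simp
      thus ?thesis using True by (simp add: bb_def)
    next
      case f2: False
      hence "v $ k < 0" using False by simp
      hence "exp (v $ k) < 1" by simp
      thus ?thesis using \<open>v $ k < 0\<close> by (simp add: bb_def divide_neg_neg)
    qed
  qed (simp add: bb_def)
  have diff: "bb k * exp (v $ k) - bb k = v $ k" for k
  proof (cases "v $ k = 0")
    case False
    hence "exp (v $ k) \<noteq> 1" by simp
    hence ne: "exp (v $ k) - 1 \<noteq> 0" by simp
    have "bb k * exp (v $ k) - bb k = (v $ k / (exp (v $ k) - 1)) * (exp (v $ k) - 1)"
      using False by (simp add: bb_def right_diff_distrib)
    also have "\<dots> = v $ k" using ne by simp
    finally show ?thesis .
  qed (simp add: bb_def)
  have apos: "positive_vec a" unfolding positive_vec_def a_def using bpos by simp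
  have bpos': "positive_vec b" unfolding positive_vec_def b_def using bpos by simp
  have amb: "a - b = v" unfolding Finite_Cartesian_Product.vec_eq_iff
  proof
    fix k show "(a - b) $ k = v $ k" unfolding a_def b_def using diff[of k] by simp
  qed
  have aneb: "a \<noteq> b" using amb v(2) by auto
  have cma: "cmonom a y = cmonom b y * exp (\<Sum>k\<in>UNIV. real (y $ k) * v $ k)" for y
  proof -
    have "cmonom a y = (\<Prod>k\<in>UNIV. bb k ^ (y $ k) * exp (v $ k) ^ (y $ k))"
      unfolding cmonom_def a_def by (simp add: power_mult_distrib)
    also have "\<dots> = cmonom b y * (\<Prod>k\<in>UNIV. exp (real (y $ k) * v $ k))"
      unfolding cmonom_def b_def prod.distrib by (simp add: exp_of_nat_mult)
    also have "(\<Prod>k\<in>UNIV. exp (real (y $ k) * v $ k)) = exp (\<Sum>k\<in>UNIV. real (y $ k) * v $ k)"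
      by (simp add: exp_sum)
    finally show ?thesis .
  qed
  have cmd: "cmonom a (fst r) - cmonom b (fst r) = cmonom b (fst r) * (exp (tr r) - 1)" for r
    unfolding cma tr_def by (simp add: algebra_simps)
  define \<kappa> where "\<kappa> r = (if tr r = 0 then 1 else tr r / (cmonom a (fst r) - cmonom b (fst r)))" for r
  have kpos: "\<kappa> r > 0" for r
  proof (cases "tr r = 0")
    case False
    have cb: "cmonom b (fst r) > 0" by (rule cmonom_pos[OF bpos'])
    show ?thesis
    proof (cases "tr r > 0")
      case True
      hence "exp (tr r) - 1 > 0" by simp
      thus ?thesis unfolding \<kappa>_def cmd using True cb False by simp
    next
      case f2: False
      hence "tr r < 0" using False by simp
      hence "exp (tr r) - 1 < 0" by simp
      hence "cmonom b (fst r) * (exp (tr r) - 1) < 0" using cb by (simp add: mult_pos_neg)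
      thus ?thesis unfolding \<kappa>_def cmd using \<open>tr r < 0\<close> False by (simp add: divide_neg_neg)
    qed
  qed (simp add: \<kappa>_def)
  have trm: "\<kappa> r * (cmonom a (fst r) - cmonom b (fst r)) = tr r" for r
  proof (cases "tr r = 0")
    case True thus ?thesis unfolding cmd by simp
  next
    case False
    have cb: "cmonom b (fst r) > 0" by (rule cmonom_pos[OF bpos'])
    have "exp (tr r) \<noteq> 1" using False by simp
    hence "cmonom b (fst r) * (exp (tr r) - 1) \<noteq> 0" using cb by simp
    thus ?thesis unfolding \<kappa>_def cmd using False by simp
  qed
  have "formation_rate R \<kappa> a - formation_rate R \<kappa> b = (\<Sum>r\<in>R. tr r *\<^sub>R gv r)"
    unfolding formation_rate_def sum_subtractf[symmetric]
    by (intro sum.cong refl) (simp add: trm[symmetric] algebra_simps)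
  hence eq: "formation_rate R \<kappa> a = formation_rate R \<kappa> b" using sum0 by simp
  have rv: "rate_vector R \<kappa>" using kpos by (simp add: rate_vector_def)
  have "a - b \<in> ?G" using amb v(1) by simp
  thus ?thesis unfolding injective_crn_def using rv apos bpos' aneb eq by blast
qed


lemma kept_rows_props:
  fixes I :: "'n::{finite,linorder} set"
  shows "distinct (kept_rows I)" "set (kept_rows I) = UNIV - I" "length (kept_rows I) = card (UNIV - I)"
  unfolding kept_rows_def by simp_all

lemma s_le_n: "stoich_dim (R :: 'n::finite reaction set) \<le> CARD('n)"
  unfolding stoich_dim_def by (rule dim_subset_UNIV_cart)

lemma card_K:
  fixes R :: "'n::finite reaction set" and I :: "'n set"
  assumes "card I = codim R"
  shows "card (UNIV - I) = stoich_dim R"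
proof -
  have "card (UNIV - I) = CARD('n) - card I" by (rule card_Diff_subset) auto
  thus ?thesis using assms s_le_n[of R] unfolding codim_def by simp
qed

lemma Ymat_eq: "Ymat_del rs I = (\<lambda>i j. (\<lambda>j. rvec (fst (rs!j))) j $ (kept_rows I ! i))"
  by (intro ext) (simp add: Ymat_del_def rvec_def)

lemma Gmat_eq: "Gmat_del rs I = (\<lambda>i j. (\<lambda>j. - gv (rs!j)) j $ (kept_rows I ! i))"
  by (intro ext) (simp add: Gmat_del_def rvec_def)

lemma RFI_neg: "RFI K (\<lambda>j. - w j) s \<longleftrightarrow> RFI K w s"
proof -
  have "RFI K (\<lambda>j. - w j) s \<longleftrightarrow> (\<forall>a. (\<forall>k\<in>K. (\<Sum>j<s. (- a j) * w j $ k) = 0) \<longrightarrow> (\<forall>j<s. a j = 0))"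
    unfolding RFI_def by simp
  also have "\<dots> \<longleftrightarrow> RFI K w s"
    unfolding RFI_def
  proof
    assume H: "\<forall>a. (\<forall>k\<in>K. (\<Sum>j<s. - a j * w j $ k) = 0) \<longrightarrow> (\<forall>j<s. a j = 0)"
    show "\<forall>a. (\<forall>k\<in>K. (\<Sum>j<s. a j * w j $ k) = 0) \<longrightarrow> (\<forall>j<s. a j = 0)"
    proof (intro allI impI)
      fix a j assume "\<forall>k\<in>K. (\<Sum>j<s. a j * w j $ k) = 0" "j < s"
      thus "a j = 0" using spec[OF H, of "\<lambda>j. - a j"] by (simp add: sum_negf)
    qed
  next
    assume H: "\<forall>a. (\<forall>k\<in>K. (\<Sum>j<s. a j * w j $ k) = 0) \<longrightarrow> (\<forall>j<s. a j = 0)"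
    show "\<forall>a. (\<forall>k\<in>K. (\<Sum>j<s. - a j * w j $ k) = 0) \<longrightarrow> (\<forall>j<s. a j = 0)"
    proof (intro allI impI)
      fix a j assume "\<forall>k\<in>K. (\<Sum>j<s. - a j * w j $ k) = 0" "j < s"
      thus "a j = 0" using spec[OF H, of a] by (simp add: sum_negf)
    qed
  qed
  finally show ?thesis .
qed

lemma RFI_cong:
  assumes H: "\<forall>j<s. \<forall>k\<in>K. w j $ k = w' j $ k"
  shows "RFI K w s \<longleftrightarrow> RFI K w' s"
proof -
  have e: "(\<Sum>j<s. a j * w j $ k) = (\<Sum>j<s. a j * w' j $ k)" if "k \<in> K" for a k
    using H that by (intro sum.cong) auto
  show ?thesis unfolding RFI_def
  proof (intro iff_allI)
    fix a
    have "(\<forall>k\<in>K. (\<Sum>j<s. a j * w j $ k) = 0) \<longleftrightarrow> (\<forall>k\<in>K. (\<Sum>j<s. a j * w' j $ k) = 0)"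
      using e by simp
    thus "((\<forall>k\<in>K. (\<Sum>j<s. a j * w j $ k) = 0) \<longrightarrow> (\<forall>j<s. a j = 0)) =
          ((\<forall>k\<in>K. (\<Sum>j<s. a j * w' j $ k) = 0) \<longrightarrow> (\<forall>j<s. a j = 0))" by simp
  qed
qed

lemma FI_RFI:
  assumes z: "\<forall>j<s. \<forall>k. k \<notin> K \<longrightarrow> w j $ k = 0" and fi: "FI w s"
  shows "RFI K w s"
  unfolding RFI_def
proof (intro allI impI)
  fix a j assume H: "\<forall>k\<in>K. (\<Sum>j<s. a j * w j $ k) = 0" and j: "j < s"
  have "(\<Sum>j<s. a j *\<^sub>R w j) = 0"
    unfolding Finite_Cartesian_Product.vec_eq_iff
  proof
    fix k
    show "(\<Sum>j<s. a j *\<^sub>R w j) $ k = 0 $ k"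
    proof (cases "k \<in> K")
      case True thus ?thesis using H by simp
    next
      case False thus ?thesis using z by simp
    qed
  qed
  thus "a j = 0" using spec[OF fi[unfolded FI_def], of a] j by simp
qed

lemma FI_nz: "FI w s \<Longrightarrow> j < s \<Longrightarrow> w j \<noteq> 0"
proof
  assume fi: "FI w s" and j: "j < s" and w: "w j = 0"
  define a where "a = (\<lambda>i. if i = j then (1::real) else 0)"
  have "(\<Sum>i<s. a i *\<^sub>R w i) = (\<Sum>i<s. 0)"
    by (intro sum.cong refl) (simp add: a_def w)
  hence "(\<Sum>i<s. a i *\<^sub>R w i) = 0" by simp
  hence "\<forall>i<s. a i = 0" using spec[OF fi[unfolded FI_def], of a] by simp
  hence "a j = 0" using j by blast
  thus False by (simp add: a_def)
qed

lemma lin_indep_fam_FI: "lin_indep_fam (map h xs) \<longleftrightarrow> FI (\<lambda>j. h (xs ! j)) (length xs)"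
proof
  assume "lin_indep_fam (map h xs)"
  hence "FI (\<lambda>j. map h xs ! j) (length (map h xs))"
    unfolding lin_indep_fam_def using FI_list by blast
  thus "FI (\<lambda>j. h (xs ! j)) (length xs)" unfolding FI_def by simp
next
  assume fi: "FI (\<lambda>j. h (xs ! j)) (length xs)"
  have "inj_on (\<lambda>j. h (xs ! j)) {..<length xs}" by (rule FI_inj[OF fi])
  hence "distinct (map h xs)" unfolding distinct_conv_nth by (auto simp: inj_on_def)
  moreover have "set (map h xs) = (\<lambda>j. h (xs ! j)) ` {..<length xs}"
    by (auto simp: in_set_conv_nth image_iff) (use nth_mem in blast)
  ultimately show "lin_indep_fam (map h xs)" unfolding lin_indep_fam_def using FI_indep[OF fi] by simp
qed

lemma rvec_proj: "rvec (proj_complex I y) $ k = (if k \<in> I then 0 else rvec y $ k)"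
  by (simp add: rvec_def proj_complex_def)

lemma outflow:
  fixes R :: "'n::finite reaction set"
  assumes fin: "finite R" and sdim: "stoich_dim R = s" and rs: "set rs \<subseteq> R" "length rs = s"
    and RG: "RFI K (\<lambda>j. gv (rs!j)) s"
  shows "UNIV - K \<subseteq> no_outflow R"
proof
  fix i assume i: "i \<in> UNIV - K"
  show "i \<in> no_outflow R"
  proof (rule ccontr)
    assume "i \<notin> no_outflow R"
    hence out: "(axis i 1, 0) \<in> R" unfolding no_outflow_def by simp
    have ax: "rvec (axis i (1::nat)) = axis i (1::real)"
      by (simp add: rvec_def axis_def Finite_Cartesian_Product.vec_eq_iff)
    have r0: "rvec (0::'n complex) = 0" by (simp add: rvec_def Finite_Cartesian_Product.vec_eq_iff)
    have "gv (axis i 1, 0) \<in> stoich_subspace R" by (rule gv_in[OF out])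
    hence "- axis i (1::real) \<in> stoich_subspace R" using ax r0 by simp
    hence axG: "axis i (1::real) \<in> stoich_subspace R" using subspace_neg[OF subspace_stoich] by fastforce
    have fi: "FI (\<lambda>j. gv (rs!j)) s" by (rule RFI_FI[OF RG])
    have gG: "\<forall>j<s. gv (rs!j) \<in> stoich_subspace R" using rs by (auto intro!: gv_in)
    have dG: "dim (stoich_subspace R) \<le> s" using sdim unfolding stoich_dim_def by simp
    obtain a where a: "axis i (1::real) = (\<Sum>j<s. a j *\<^sub>R gv (rs!j))"
      using FI_span[OF fi gG dG axG] by blast
    have "\<forall>k\<in>K. (\<Sum>j<s. a j * gv (rs!j) $ k) = 0"
    proof
      fix k assume k: "k \<in> K"
      have "(\<Sum>j<s. a j * gv (rs!j) $ k) = axis i (1::real) $ k" unfolding a by simp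
      also have "\<dots> = 0" using i k by (auto simp: axis_def)
      finally show "(\<Sum>j<s. a j * gv (rs!j) $ k) = 0" .
    qed
    hence "\<forall>j<s. a j = 0" using spec[OF RG[unfolded RFI_def], of a] by simp
    hence "axis i (1::real) = 0" unfolding a by simp
    hence "axis i (1::real) $ i = 0" by simp
    thus False by (simp add: axis_def)
  qed
qed


lemma LA:
  fixes R :: "('n::{finite,linorder}) reaction set"
  assumes crn: "crn R" and rs: "distinct rs" "set rs \<subseteq> R" "length rs = stoich_dim R"
    and I: "I \<in> no_outflow_d R"
    and det: "detm (stoich_dim R) (Ymat_del rs I) * detm (stoich_dim R) (Gmat_del rs I) \<noteq> 0"
  shows "\<exists>\<kappa> c. rate_vector R \<kappa> \<and> positive_vec c \<and> \<not> degenerate_at R \<kappa> c"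
proof -
  define s where "s = stoich_dim R"
  define K where "K = UNIV - I"
  have fin: "finite R" using crn unfolding crn_def by simp
  have cI: "card I = codim R" using I unfolding no_outflow_d_def by simp
  have kr: "distinct (kept_rows I)" "set (kept_rows I) = K" "length (kept_rows I) = s"
    using kept_rows_props[of I] card_K[OF cI] unfolding K_def s_def by auto
  have dY: "detm s (\<lambda>i j. (\<lambda>j. rvec (fst (rs!j))) j $ (kept_rows I ! i)) \<noteq> 0"
    using det unfolding Ymat_eq s_def by auto
  have dG: "detm s (\<lambda>i j. (\<lambda>j. - gv (rs!j)) j $ (kept_rows I ! i)) \<noteq> 0"
    using det unfolding Gmat_eq s_def by auto
  have HY: "\<forall>b. (\<forall>j<s. (\<Sum>k\<in>K. b k * rvec (fst (rs!j)) $ k) = 0) \<longrightarrow> (\<forall>k\<in>K. b k = 0)"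
    using detm_rows[OF kr dY] by blast
  have HG: "RFI K (\<lambda>j. gv (rs!j)) s"
    using dG unfolding detm_RFI[OF kr] RFI_neg .
  show ?thesis by (rule dir1[OF fin rs(1,2) rs(3)[folded s_def] s_def[symmetric] HY HG])
qed

lemma LB:
  fixes R :: "('n::{finite,linorder}) reaction set"
  assumes crn: "crn R" and kap: "rate_vector R \<kappa>" and nd: "\<not> degenerate_at R \<kappa> c"
  shows "\<exists>rs I. distinct rs \<and> set rs \<subseteq> R \<and> length rs = stoich_dim R \<and> I \<in> no_outflow_d R \<and>
     detm (stoich_dim R) (Ymat_del rs I) * detm (stoich_dim R) (Gmat_del rs I) \<noteq> 0"
proof -
  define s where "s = stoich_dim R"
  have fin: "finite R" using crn unfolding crn_def by simp
  obtain rs K where rsK: "distinct rs" "set rs \<subseteq> R" "length rs = s" "card K = s"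
     "RFI K (\<lambda>j. rvec (fst (rs!j))) s" "RFI K (\<lambda>j. gv (rs!j)) s"
    using dir2[OF fin s_def[symmetric] kap nd] by blast
  define I where "I = UNIV - K"
  have UK: "UNIV - I = K" unfolding I_def by auto
  have cI: "card I = codim R"
  proof -
    have "card I = CARD('n) - card K" unfolding I_def by (rule card_Diff_subset) auto
    thus ?thesis unfolding codim_def using rsK(4) s_def by simp
  qed
  have Iout: "I \<subseteq> no_outflow R"
    unfolding I_def by (rule outflow[OF fin s_def[symmetric] rsK(2,3) rsK(6)])
  have IO: "I \<in> no_outflow_d R" unfolding no_outflow_d_def using cI Iout by simp
  have kr: "distinct (kept_rows I)" "set (kept_rows I) = K" "length (kept_rows I) = s"
    using kept_rows_props[of I] UK rsK(4) by auto
  have dY: "detm s (Ymat_del rs I) \<noteq> 0"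
    unfolding Ymat_eq detm_RFI[OF kr] by (rule rsK(5))
  have dG: "detm s (Gmat_del rs I) \<noteq> 0"
    unfolding Gmat_eq detm_RFI[OF kr] RFI_neg by (rule rsK(6))
  show ?thesis using rsK(1,2,3) IO dY dG unfolding s_def by auto
qed

definition prj :: "'n::finite set \<Rightarrow> 'n reaction \<Rightarrow> 'n reaction" where
  "prj I r = (proj_complex I (fst r), proj_complex I (snd r))"

lemma LC:
  fixes R :: "('n::{finite,linorder}) reaction set"
  assumes crn: "crn R" and rs: "distinct rs" "set rs \<subseteq> R" "length rs = stoich_dim R"
    and I: "I \<in> no_outflow_d R"
    and det: "detm (stoich_dim R) (Ymat_del rs I) * detm (stoich_dim R) (Gmat_del rs I) \<noteq> 0"
  shows "\<exists>rs'. distinct rs' \<and> set rs' \<subseteq> projected_reactions R I \<and> length rs' = stoich_dim R \<and>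
     lin_indep_fam (map (\<lambda>r. rvec (fst r) - rvec (snd r)) rs') \<and> lin_indep_fam (map (\<lambda>r. rvec (fst r)) rs')"
proof -
  define s where "s = stoich_dim R"
  define K where "K = UNIV - I"
  have cI: "card I = codim R" using I unfolding no_outflow_d_def by simp
  have kr: "distinct (kept_rows I)" "set (kept_rows I) = K" "length (kept_rows I) = s"
    using kept_rows_props[of I] card_K[OF cI] unfolding K_def s_def by auto
  have dY: "detm s (\<lambda>i j. (\<lambda>j. rvec (fst (rs!j))) j $ (kept_rows I ! i)) \<noteq> 0"
    using det unfolding Ymat_eq s_def by auto
  have dG: "detm s (\<lambda>i j. (\<lambda>j. - gv (rs!j)) j $ (kept_rows I ! i)) \<noteq> 0"
    using det unfolding Gmat_eq s_def by auto
  have RY: "RFI K (\<lambda>j. rvec (fst (rs!j))) s"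
    using dY unfolding detm_RFI[OF kr] .
  have RG: "RFI K (\<lambda>j. - gv (rs!j)) s"
    using dG unfolding detm_RFI[OF kr] .
  define rs' where "rs' = map (prj I) rs"
  have len: "length rs' = s" using rs(3) by (simp add: rs'_def s_def)
  have nth': "rs' ! j = prj I (rs ! j)" if "j < s" for j using that rs(3) by (simp add: rs'_def s_def)
  define wY where "wY j = rvec (fst (rs' ! j))" for j
  define wG where "wG j = rvec (fst (rs' ! j)) - rvec (snd (rs' ! j))" for j
  have wY_k: "wY j $ k = (if k \<in> I then 0 else rvec (fst (rs!j)) $ k)" if "j < s" for j k
    unfolding wY_def nth'[OF that] prj_def by (simp add: rvec_proj)
  have wG_k: "wG j $ k = (if k \<in> I then 0 else (- gv (rs!j)) $ k)" if "j < s" for j k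
    unfolding wG_def nth'[OF that] prj_def by (simp add: rvec_proj)
  have RY': "RFI K wY s" using RY by (subst RFI_cong) (auto simp: wY_k K_def)
  have RG': "RFI K wG s" using RG by (subst RFI_cong) (auto simp: wG_k K_def)
  have FY: "FI wY s" by (rule RFI_FI[OF RY'])
  have FG: "FI wG s" by (rule RFI_FI[OF RG'])
  have li1: "lin_indep_fam (map (\<lambda>r. rvec (fst r) - rvec (snd r)) rs')"
    unfolding lin_indep_fam_FI len using FG unfolding wG_def .
  have li2: "lin_indep_fam (map (\<lambda>r. rvec (fst r)) rs')"
    unfolding lin_indep_fam_FI len using FY unfolding wY_def .
  have sub: "set rs' \<subseteq> projected_reactions R I"
  proof
    fix x assume "x \<in> set rs'"
    then obtain j where j: "j < s" "x = rs' ! j" using len by (auto simp: in_set_conv_nth)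
    have rj: "rs ! j \<in> R" using rs(2,3) j(1) nth_mem s_def by auto
    have "wG j \<noteq> 0" by (rule FI_nz[OF FG j(1)])
    hence "fst x \<noteq> snd x" unfolding wG_def j(2) by auto
    thus "x \<in> projected_reactions R I"
    proof -
      have xe: "x = (proj_complex I (fst (rs ! j)), proj_complex I (snd (rs ! j)))"
        using j nth'[OF j(1)] by (simp add: prj_def)
      have ne: "proj_complex I (fst (rs ! j)) \<noteq> proj_complex I (snd (rs ! j))"
        using \<open>fst x \<noteq> snd x\<close> xe by simp
      show ?thesis unfolding projected_reactions_def mem_Collect_eq
        by (rule exI[of _ "rs ! j"]) (use xe ne rj in simp)
    qed
  qed
  have dist: "distinct rs'"
    unfolding distinct_conv_nth len
  proof (intro allI impI)
    fix i j assume ij: "i < s" "j < s" "i \<noteq> j"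
    show "rs' ! i \<noteq> rs' ! j"
    proof
      assume "rs' ! i = rs' ! j"
      hence "wG i = wG j" unfolding wG_def by simp
      thus False using FI_inj[OF FG] ij by (auto simp: inj_on_def)
    qed
  qed
  show ?thesis using dist sub len li1 li2 unfolding s_def by blast
qed

lemma LD:
  fixes R :: "('n::{finite,linorder}) reaction set"
  assumes crn: "crn R" and I: "I \<in> no_outflow_d R"
    and rs': "distinct rs'" "set rs' \<subseteq> projected_reactions R I" "length rs' = stoich_dim R"
    and li1: "lin_indep_fam (map (\<lambda>r. rvec (fst r) - rvec (snd r)) rs')"
    and li2: "lin_indep_fam (map (\<lambda>r. rvec (fst r)) rs')"
  shows "\<exists>rs. distinct rs \<and> set rs \<subseteq> R \<and> length rs = stoich_dim R \<and>
     detm (stoich_dim R) (Ymat_del rs I) * detm (stoich_dim R) (Gmat_del rs I) \<noteq> 0"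
proof -
  define s where "s = stoich_dim R"
  define K where "K = UNIV - I"
  have cI: "card I = codim R" using I unfolding no_outflow_d_def by simp
  have kr: "distinct (kept_rows I)" "set (kept_rows I) = K" "length (kept_rows I) = s"
    using kept_rows_props[of I] card_K[OF cI] unfolding K_def s_def by auto
  define ch where "ch x = (SOME r. r \<in> R \<and> x = prj I r)" for x
  have ch: "ch x \<in> R \<and> x = prj I (ch x)" if "x \<in> projected_reactions R I" for x
  proof -
    from that obtain r where "r \<in> R" "x = prj I r" unfolding projected_reactions_def prj_def by auto
    hence "r \<in> R \<and> x = prj I r" by simp
    thus ?thesis unfolding ch_def by (rule someI[where P="\<lambda>r. r \<in> R \<and> x = prj I r"])
  qed
  define rs where "rs = map ch rs'"
  have len: "length rs = s" using rs'(3) by (simp add: rs_def s_def)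
  have nth: "rs ! j \<in> R" "rs' ! j = prj I (rs ! j)" if "j < s" for j
  proof -
    have "rs' ! j \<in> set rs'" using that rs'(3) unfolding s_def by simp
    hence "rs' ! j \<in> projected_reactions R I" using rs'(2) by blast
    moreover have "rs ! j = ch (rs' ! j)" using that rs'(3) unfolding rs_def s_def by simp
    ultimately show "rs ! j \<in> R" "rs' ! j = prj I (rs ! j)" using ch by auto
  qed
  have sub: "set rs \<subseteq> R"
  proof
    fix x assume "x \<in> set rs"
    then obtain j where "j < s" "x = rs ! j" using len by (auto simp: in_set_conv_nth)
    thus "x \<in> R" using nth by simp
  qed
  have dist: "distinct rs"
    unfolding distinct_conv_nth len
  proof (intro allI impI)
    fix i j assume ij: "i < s" "j < s" "i \<noteq> j"
    have "rs' ! i \<noteq> rs' ! j" using rs'(1,3) ij unfolding s_def by (simp add: nth_eq_iff_index_eq)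
    thus "rs ! i \<noteq> rs ! j" using nth(2)[OF ij(1)] nth(2)[OF ij(2)] by auto
  qed
  define wY where "wY j = rvec (fst (rs' ! j))" for j
  define wG where "wG j = rvec (fst (rs' ! j)) - rvec (snd (rs' ! j))" for j
  have wY_k: "wY j $ k = (if k \<in> I then 0 else rvec (fst (rs!j)) $ k)" if "j < s" for j k
    unfolding wY_def nth(2)[OF that] prj_def by (simp add: rvec_proj)
  have wG_k: "wG j $ k = (if k \<in> I then 0 else (- gv (rs!j)) $ k)" if "j < s" for j k
    unfolding wG_def nth(2)[OF that] prj_def by (simp add: rvec_proj)
  have FY: "FI wY s" using li2 unfolding lin_indep_fam_FI wY_def rs'(3) s_def .
  have FG: "FI wG s" using li1 unfolding lin_indep_fam_FI wG_def rs'(3) s_def .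
  have RY: "RFI K wY s" by (rule FI_RFI[OF _ FY]) (auto simp: wY_k K_def)
  have RG: "RFI K wG s" by (rule FI_RFI[OF _ FG]) (auto simp: wG_k K_def)
  have RY': "RFI K (\<lambda>j. rvec (fst (rs!j))) s" using RY by (subst (asm) RFI_cong) (auto simp: wY_k K_def)
  have RG': "RFI K (\<lambda>j. - gv (rs!j)) s" using RG by (subst (asm) RFI_cong) (auto simp: wG_k K_def)
  have dY: "detm s (Ymat_del rs I) \<noteq> 0" unfolding Ymat_eq detm_RFI[OF kr] by (rule RY')
  have dG: "detm s (Gmat_del rs I) \<noteq> 0" unfolding Gmat_eq detm_RFI[OF kr] by (rule RG')
  show ?thesis using dist sub len dY dG unfolding s_def by auto
qed


definition CI :: "('n::{finite,linorder}) reaction set \<Rightarrow> bool" where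
  "CI R = (\<forall>\<kappa>. rate_vector R \<kappa> \<longrightarrow> (\<forall>c. positive_vec c \<longrightarrow> degenerate_at R \<kappa> c))"
definition CII :: "('n::{finite,linorder}) reaction set \<Rightarrow> bool" where
  "CII R = (\<forall>rs. distinct rs \<and> set rs \<subseteq> R \<and> length rs = stoich_dim R \<longrightarrow>
               (\<forall>I\<in>no_outflow_d R. detm (stoich_dim R) (Ymat_del rs I) * detm (stoich_dim R) (Gmat_del rs I) = 0))"
definition CIII :: "('n::{finite,linorder}) reaction set \<Rightarrow> bool" where
  "CIII R = (\<forall>I\<in>no_outflow_d R. \<forall>rs. distinct rs \<and> set rs \<subseteq> projected_reactions R I \<and> length rs = stoich_dim R \<longrightarrow>
               lin_indep_fam (map (\<lambda>r. rvec (fst r) - rvec (snd r)) rs) \<longrightarrow>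
               \<not> lin_indep_fam (map (\<lambda>r. rvec (fst r)) rs))"

lemma main_equiv:
  fixes R :: "('n::{finite,linorder}) reaction set"
  assumes crn: "crn R"
  shows "(CI R \<longleftrightarrow> CII R) \<and> (CII R \<longleftrightarrow> CIII R) \<and>
       ((CI R \<or> CII R \<or> CIII R) \<longrightarrow>
          \<not> injective_crn R \<and>
          (\<forall>\<kappa>. rate_vector R \<kappa> \<longrightarrow> (\<forall>c. formation_rate R \<kappa> c = 0 \<longrightarrow> degenerate_at R \<kappa> c)))"
proof -
  have fin: "finite R" using crn unfolding crn_def by simp
  have i2: "CII R" if "CI R"
  proof (rule ccontr)
    assume "\<not> CII R"
    then obtain rs I where "distinct rs" "set rs \<subseteq> R" "length rs = stoich_dim R" "I \<in> no_outflow_d R"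
      "detm (stoich_dim R) (Ymat_del rs I) * detm (stoich_dim R) (Gmat_del rs I) \<noteq> 0"
      unfolding CII_def by blast
    from LA[OF crn this] obtain \<kappa> c where "rate_vector R \<kappa>" "positive_vec c" "\<not> degenerate_at R \<kappa> c" by blast
    thus False using that unfolding CI_def by blast
  qed
  have nd: "degenerate_at R \<kappa> c" if "CII R" "rate_vector R \<kappa>" for \<kappa> c
  proof (rule ccontr)
    assume "\<not> degenerate_at R \<kappa> c"
    from LB[OF crn that(2) this] obtain rs I where "distinct rs \<and> set rs \<subseteq> R \<and> length rs = stoich_dim R \<and> I \<in> no_outflow_d R \<and>
     detm (stoich_dim R) (Ymat_del rs I) * detm (stoich_dim R) (Gmat_del rs I) \<noteq> 0" by blast
    thus False using that(1) unfolding CII_def by blast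
  qed
  have i1: "CI R" if "CII R" unfolding CI_def using nd[OF that] by blast
  have i3: "CIII R" if "CII R"
  proof (rule ccontr)
    assume "\<not> CIII R"
    then obtain I rs' where "I \<in> no_outflow_d R" "distinct rs'" "set rs' \<subseteq> projected_reactions R I" "length rs' = stoich_dim R"
      "lin_indep_fam (map (\<lambda>r. rvec (fst r) - rvec (snd r)) rs')" "lin_indep_fam (map (\<lambda>r. rvec (fst r)) rs')"
      unfolding CIII_def by blast
    from LD[OF crn this] obtain rs where "distinct rs \<and> set rs \<subseteq> R \<and> length rs = stoich_dim R \<and>
     detm (stoich_dim R) (Ymat_del rs I) * detm (stoich_dim R) (Gmat_del rs I) \<noteq> 0" by blast
    thus False using that \<open>I \<in> no_outflow_d R\<close> unfolding CII_def by blast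
  qed
  have i4: "CII R" if "CIII R"
  proof (rule ccontr)
    assume "\<not> CII R"
    then obtain rs I where "distinct rs" "set rs \<subseteq> R" "length rs = stoich_dim R" "I \<in> no_outflow_d R"
      "detm (stoich_dim R) (Ymat_del rs I) * detm (stoich_dim R) (Gmat_del rs I) \<noteq> 0"
      unfolding CII_def by blast
    from LC[OF crn this] obtain rs' where "distinct rs' \<and> set rs' \<subseteq> projected_reactions R I \<and> length rs' = stoich_dim R \<and>
     lin_indep_fam (map (\<lambda>r. rvec (fst r) - rvec (snd r)) rs') \<and> lin_indep_fam (map (\<lambda>r. rvec (fst r)) rs')" by blast
    thus False using that \<open>I \<in> no_outflow_d R\<close> unfolding CIII_def by blast
  qed
  have cons: "\<not> injective_crn R \<and>
          (\<forall>\<kappa>. rate_vector R \<kappa> \<longrightarrow> (\<forall>c. formation_rate R \<kappa> c = 0 \<longrightarrow> degenerate_at R \<kappa> c))"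
    if "CI R"
  proof
    have rv: "rate_vector R (\<lambda>r. 1)" by (simp add: rate_vector_def)
    have pv: "positive_vec (\<chi> k. 1 :: real^'n::{finite,linorder})" by (simp add: positive_vec_def)
    have "degenerate_at R (\<lambda>r. 1) (\<chi> k. 1)" using that rv pv unfolding CI_def by blast
    thus "\<not> injective_crn R" by (rule noninj[OF fin])
    show "\<forall>\<kappa>. rate_vector R \<kappa> \<longrightarrow> (\<forall>c. formation_rate R \<kappa> c = 0 \<longrightarrow> degenerate_at R \<kappa> c)"
      using nd i2[OF that] by blast
  qed
  show ?thesis using i1 i2 i3 i4 cons by blast
qed

theorem corollary8p1:
  fixes R :: "('n::{finite,linorder}) reaction set"
  assumes "crn R"
  shows "let
      s = stoich_dim R;
      ci = (\<forall>\<kappa>. rate_vector R \<kappa> \<longrightarrow> (\<forall>c. positive_vec c \<longrightarrow> degenerate_at R \<kappa> c));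
      cii = (\<forall>rs. distinct rs \<and> set rs \<subseteq> R \<and> length rs = s \<longrightarrow>
               (\<forall>I\<in>no_outflow_d R. detm s (Ymat_del rs I) * detm s (Gmat_del rs I) = 0));
      ciii = (\<forall>I\<in>no_outflow_d R. \<forall>rs. distinct rs \<and> set rs \<subseteq> projected_reactions R I \<and> length rs = s \<longrightarrow>
               lin_indep_fam (map (\<lambda>r. rvec (fst r) - rvec (snd r)) rs) \<longrightarrow>
               \<not> lin_indep_fam (map (\<lambda>r. rvec (fst r)) rs))
    in (ci \<longleftrightarrow> cii) \<and> (cii \<longleftrightarrow> ciii) \<and>
       ((ci \<or> cii \<or> ciii) \<longrightarrow>
          \<not> injective_crn R \<and>
          (\<forall>\<kappa>. rate_vector R \<kappa> \<longrightarrow> (\<forall>c. formation_rate R \<kappa> c = 0 \<longrightarrow> degenerate_at R \<kappa> c)))"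
  using main_equiv[OF assms] unfolding CI_def CII_def CIII_def Let_def .


end
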